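(* Let $\mathcal{F}=(V_m,\eta_m)_{m=1}^4$ be a tetrahedron of flags in $\mathbb{RP}^3$. The following are equivalent: (1) $\mathcal{F}$ is an inscribed tetrahedron of flags (of hyperbolic, Anti-de Sitter or half-pipe type); (2) $t^{\mathcal{F}}_\sigma=1$ for all edge-faces $\sigma$; (3) $e^{\mathcal{F}}_\sigma=e^{\mathcal{F}}_{\mathrm{op}\,\sigma}$ for all edge-faces $\sigma$. Moreover, in this case, for any edge-face $\sigma$, $\mathcal{F}$ is of hyperbolic type if $j_\sigma>0$, of Anti-de Sitter type if $j_\sigma<0$, and of half-pipe type if $j_\sigma=0$, where $j_\sigma=e_\sigma-X_\sigma^2$.
   Context: Flags: $(V,\eta)$, $\eta$ a plane of $\mathbb{RP}^3$ through $V$. A tetrahedron of flags is a non-degenerate ($\eta_i(V_j)=0\iff i=j$) ordered quadruple $(V_m,\eta_m)_{m=1}^4$ with $V_m$ not coplanar such that some projective tetrahedron with vertices $V_m$ has interior disjoint from all $\eta_m$. Edge-faces $\sigma=(ij)k$ are even permutations $[ijkl]$ of $\{1,2,3,4\}$; $\sigma_+=(ki)j$, $\sigma_-=(jk)i$, $\mathrm{op}\,\sigma=(lk)j$. Triple ratio $t_\sigma=\frac{\bar\eta_i(\bar V_j)\bar\eta_j(\bar V_k)\bar\eta_k(\bar V_i)}{\bar\eta_i(\bar V_k)\bar\eta_j(\bar V_i)\bar\eta_k(\bar V_j)}$, edge ratio $e_\sigma=\frac{\bar\eta_i(\bar V_k)\bar\eta_j(\bar V_l)}{\bar\eta_i(\bar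 V_l)\bar\eta_j(\bar V_k)}$; $\mu_\sigma=e_{\sigma_-}e_{\sigma_+}-e_{\sigma_-}+1$, $X_\sigma=\mu_\sigma t_\sigma e_\sigma/(t_\sigma+1)$. Let $B$ be a symmetric bilinear form on $\mathbb{R}^4$ which is either nondegenerate of signature $(3,1)$ (hyperbolic type), nondegenerate of signature $(2,2)$ (Anti-de Sitter type), or degenerate with one-dimensional radical and of signature $(2,1)$ on the quotient by the radical (half-pipe type); let $\mathbb{X}_B=\{[v]:B(v,v)<0\}$. $\mathcal{F}$ is inscribed in $\mathbb{X}_B$ if there is a projective tetrahedron with vertices $V_1,\dots,V_4$ with interior contained in $\mathbb{X}_B$, each $V_m=[v_m]$ satisfies $B(v_m,v_m)=0$ and $v_m$ not in the radical, and $\eta_m=[B(v_m,\cdot)]$ is the tangent plane to the quadric at $V_m$. $\mathcal{F}$ is an inscribed tetrahedron of flags of the corresponding type if it is inscribed in $\mathbb{X}_B$ for some such $B$. *)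

theory Defs
  imports "HOL-Analysis.Analysis" "HOL-Combinatorics.Permutations"
begin

text \<open>Points of RP^3 are represented by nonzero lifts in real^4, planes by
nonzero covectors in real^4 (acting by the inner product). The tetrahedron of flags is
given by lifts v m, eta m for m in {1,2,3,4}; all quantities below are invariant under
rescaling of the lifts.\<close>

definition idx :: "nat set" where "idx = {1,2,3,4}"

definition ev :: "real^4 \<Rightarrow> real^4 \<Rightarrow> real" where
  "ev \<eta> x = \<eta> \<bullet> x"

text \<open>Interior of the projective tetrahedron with vertices [v m], determined by a choice of
signs s m of the lifts: (lifts of) points sum_m lambda_m s_m v_m with all lambda_m > 0.\<close>
definition tet_interior :: "(nat \<Rightarrow> real^4) \<Rightarrow> (nat \<Rightarrow> real) \<Rightarrow> (real^4) set" where
  "tet_interior v s = {w. \<exists>lam::nat \<Rightarrow> real. (\<forall>m\<in>idx. lam m > 0) \<and>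
                          w = (\<Sum>m\<in>idx. (lam m * s m) *\<^sub>R v m)}"

definition sign_choice :: "(nat \<Rightarrow> real) \<Rightarrow> bool" where
  "sign_choice s \<longleftrightarrow> (\<forall>m\<in>idx. s m = 1 \<or> s m = -1)"

definition coplanar :: "(nat \<Rightarrow> real^4) \<Rightarrow> bool" where
  "coplanar v \<longleftrightarrow> (\<exists>\<eta>::real^4. \<eta> \<noteq> 0 \<and> (\<forall>m\<in>idx. ev \<eta> (v m) = 0))"

definition tetrahedron_of_flags :: "(nat \<Rightarrow> real^4) \<Rightarrow> (nat \<Rightarrow> real^4) \<Rightarrow> bool" where
  "tetrahedron_of_flags v eta \<longleftrightarrow>
     (\<forall>m\<in>idx. v m \<noteq> 0 \<and> eta m \<noteq> 0 \<and> ev (eta m) (v m) = 0) \<and>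
     (\<forall>i\<in>idx. \<forall>j\<in>idx. ev (eta i) (v j) = 0 \<longleftrightarrow> i = j) \<and>
     \<not> coplanar v \<and>
     (\<exists>s. sign_choice s \<and> (\<forall>w\<in>tet_interior v s. \<forall>m\<in>idx. ev (eta m) w \<noteq> 0))"

text \<open>Edge-faces: quadruples (i,j,k,l) such that 1,2,3,4 to i,j,k,l is an even permutation;
the edge-face (ij)k corresponds to (i,j,k,l).\<close>
definition edge_face :: "nat \<times> nat \<times> nat \<times> nat \<Rightarrow> bool" where
  "edge_face \<sigma> \<longleftrightarrow> (case \<sigma> of (i,j,k,l) \<Rightarrow>
     (\<exists>p. p permutes idx \<and> evenperm p \<and> p 1 = i \<and> p 2 = j \<and> p 3 = k \<and> p 4 = l))"

definition ef_plus :: "nat \<times> nat \<times> nat \<times> nat \<Rightarrow> nat \<times> nat \<times> nat \<times> nat" where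
  "ef_plus \<sigma> = (case \<sigma> of (i,j,k,l) \<Rightarrow> (k,i,j,l))"

definition ef_minus :: "nat \<times> nat \<times> nat \<times> nat \<Rightarrow> nat \<times> nat \<times> nat \<times> nat" where
  "ef_minus \<sigma> = (case \<sigma> of (i,j,k,l) \<Rightarrow> (j,k,i,l))"

definition ef_op :: "nat \<times> nat \<times> nat \<times> nat \<Rightarrow> nat \<times> nat \<times> nat \<times> nat" where
  "ef_op \<sigma> = (case \<sigma> of (i,j,k,l) \<Rightarrow> (l,k,j,i))"

definition triple_ratio :: "(nat \<Rightarrow> real^4) \<Rightarrow> (nat \<Rightarrow> real^4) \<Rightarrow> nat \<times> nat \<times> nat \<times> nat \<Rightarrow> real" where
  "triple_ratio v eta \<sigma> = (case \<sigma> of (i,j,k,l) \<Rightarrow>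
     (ev (eta i) (v j) * ev (eta j) (v k) * ev (eta k) (v i)) /
     (ev (eta i) (v k) * ev (eta j) (v i) * ev (eta k) (v j)))"

definition edge_ratio :: "(nat \<Rightarrow> real^4) \<Rightarrow> (nat \<Rightarrow> real^4) \<Rightarrow> nat \<times> nat \<times> nat \<times> nat \<Rightarrow> real" where
  "edge_ratio v eta \<sigma> = (case \<sigma> of (i,j,k,l) \<Rightarrow>
     (ev (eta i) (v k) * ev (eta j) (v l)) / (ev (eta i) (v l) * ev (eta j) (v k)))"

definition mu_inv :: "(nat \<Rightarrow> real^4) \<Rightarrow> (nat \<Rightarrow> real^4) \<Rightarrow> nat \<times> nat \<times> nat \<times> nat \<Rightarrow> real" where
  "mu_inv v eta \<sigma> = edge_ratio v eta (ef_minus \<sigma>) * edge_ratio v eta (ef_plus \<sigma>)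
                      - edge_ratio v eta (ef_minus \<sigma>) + 1"

definition X_inv :: "(nat \<Rightarrow> real^4) \<Rightarrow> (nat \<Rightarrow> real^4) \<Rightarrow> nat \<times> nat \<times> nat \<times> nat \<Rightarrow> real" where
  "X_inv v eta \<sigma> = mu_inv v eta \<sigma> * triple_ratio v eta \<sigma> * edge_ratio v eta \<sigma>
                     / (triple_ratio v eta \<sigma> + 1)"

definition j_inv :: "(nat \<Rightarrow> real^4) \<Rightarrow> (nat \<Rightarrow> real^4) \<Rightarrow> nat \<times> nat \<times> nat \<times> nat \<Rightarrow> real" where
  "j_inv v eta \<sigma> = edge_ratio v eta \<sigma> - (X_inv v eta \<sigma>)\<^sup>2"

definition bform :: "real^4^4 \<Rightarrow> real^4 \<Rightarrow> real^4 \<Rightarrow> real" where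
  "bform M x y = x \<bullet> (M *v y)"

definition diag_mat :: "real^4 \<Rightarrow> real^4^4" where
  "diag_mat d = (\<chi> i j. if i = j then d $ i else 0)"

text \<open>Signature via Sylvester normal form: M is congruent to the given diagonal matrix.\<close>
definition congruent_to :: "real^4^4 \<Rightarrow> real^4^4 \<Rightarrow> bool" where
  "congruent_to M D \<longleftrightarrow> (\<exists>P::real^4^4. invertible P \<and> transpose P ** M ** P = D)"

definition hyperbolic_form :: "real^4^4 \<Rightarrow> bool" where
  "hyperbolic_form M \<longleftrightarrow> transpose M = M \<and> congruent_to M (diag_mat (vector [1, 1, 1, -1]))"

definition ads_form :: "real^4^4 \<Rightarrow> bool" where
  "ads_form M \<longleftrightarrow> transpose M = M \<and> congruent_to M (diag_mat (vector [1, 1, -1, -1]))"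

definition halfpipe_form :: "real^4^4 \<Rightarrow> bool" where
  "halfpipe_form M \<longleftrightarrow> transpose M = M \<and> congruent_to M (diag_mat (vector [1, 1, -1, 0]))"

definition in_radical :: "real^4^4 \<Rightarrow> real^4 \<Rightarrow> bool" where
  "in_radical M x \<longleftrightarrow> (\<forall>y. bform M x y = 0)"

definition inscribed_in :: "(nat \<Rightarrow> real^4) \<Rightarrow> (nat \<Rightarrow> real^4) \<Rightarrow> real^4^4 \<Rightarrow> bool" where
  "inscribed_in v eta M \<longleftrightarrow>
     (\<exists>s. sign_choice s \<and> (\<forall>w\<in>tet_interior v s. bform M w w < 0)) \<and>
     (\<forall>m\<in>idx. bform M (v m) (v m) = 0 \<and> \<not> in_radical M (v m) \<and>
        (\<exists>c::real. c \<noteq> 0 \<and> (\<forall>y. bform M (v m) y = c * ev (eta m) y)))"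

definition inscribed_hyperbolic where
  "inscribed_hyperbolic v eta \<longleftrightarrow> (\<exists>M. hyperbolic_form M \<and> inscribed_in v eta M)"
definition inscribed_ads where
  "inscribed_ads v eta \<longleftrightarrow> (\<exists>M. ads_form M \<and> inscribed_in v eta M)"
definition inscribed_halfpipe where
  "inscribed_halfpipe v eta \<longleftrightarrow> (\<exists>M. halfpipe_form M \<and> inscribed_in v eta M)"

definition inscribed_tetrahedron_of_flags where
  "inscribed_tetrahedron_of_flags v eta \<longleftrightarrow>
     inscribed_hyperbolic v eta \<or> inscribed_ads v eta \<or> inscribed_halfpipe v eta"

end

theory Submission imports Defs begin

lemma idx_iff: "m \<in> idx \<longleftrightarrow> m = 1 \<or> m = 2 \<or> m = 3 \<or> m = (4::nat)"
  by (auto simp: idx_def)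

lemma sum_idx: "sum f idx = f 1 + f 2 + f 3 + f (4::nat)"
  by (simp add: idx_def ac_simps)

lemma vector_4:
 "(vector [x,y,z,w] ::('a::zero)^4)$1 = x"
 "(vector [x,y,z,w] ::('a::zero)^4)$2 = y"
 "(vector [x,y,z,w] ::('a::zero)^4)$3 = z"
 "(vector [x,y,z,w] ::('a::zero)^4)$4 = w"
  unfolding vector_def by simp_all

lemma bform_add_left: "bform M (x + y) z = bform M x z + bform M y z"
  by (simp add: bform_def inner_add_left)
lemma bform_add_right: "bform M z (x + y) = bform M z x + bform M z y"
  by (simp add: bform_def inner_add_right matrix_vector_right_distrib)
lemma bform_scale_left: "bform M (c *\<^sub>R x) z = c * bform M x z"
  by (simp add: bform_def)
lemma bform_scale_right: "bform M z (c *\<^sub>R x) = c * bform M z x"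
  by (simp add: bform_def matrix_vector_mult_scaleR)
lemma bform_sym: "transpose M = M \<Longrightarrow> bform M x y = bform M y x"
  unfolding bform_def
  by (metis dot_lmul_matrix inner_commute transpose_matrix_vector)

definition lc :: "(nat \<Rightarrow> real^4) \<Rightarrow> real \<Rightarrow> real \<Rightarrow> real \<Rightarrow> real \<Rightarrow> real^4" where
  "lc v x1 x2 x3 x4 = x1 *\<^sub>R v 1 + x2 *\<^sub>R v 2 + x3 *\<^sub>R v 3 + x4 *\<^sub>R v 4"

lemma bform_lc:
  assumes "\<forall>i\<in>idx. \<forall>j\<in>idx. bform M (v i) (v j) = g i j"
  shows "bform M (lc v x1 x2 x3 x4) (lc v y1 y2 y3 y4) =
     x1*y1*g 1 1 + x1*y2*g 1 2 + x1*y3*g 1 3 + x1*y4*g 1 4 +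
     x2*y1*g 2 1 + x2*y2*g 2 2 + x2*y3*g 2 3 + x2*y4*g 2 4 +
     x3*y1*g 3 1 + x3*y2*g 3 2 + x3*y3*g 3 3 + x3*y4*g 3 4 +
     x4*y1*g 4 1 + x4*y2*g 4 2 + x4*y3*g 4 3 + x4*y4*g 4 4"
  using assms unfolding lc_def
  by (simp add: bform_add_left bform_add_right bform_scale_left bform_scale_right idx_iff algebra_simps)


definition Qf :: "real \<Rightarrow> real \<Rightarrow> real \<Rightarrow> real" where
  "Qf x y z = x*x + y*y + z*z - 2*x*y - 2*y*z - 2*z*x"

locale gram =
  fixes M :: "real^4^4" and v :: "nat \<Rightarrow> real^4" and g :: "nat \<Rightarrow> nat \<Rightarrow> real"
  assumes gv: "\<forall>i\<in>idx. \<forall>j\<in>idx. bform M (v i) (v j) = g i j"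
  and g0: "g 1 1 = 0" "g 2 2 = 0" "g 3 3 = 0" "g 4 4 = 0"
  and gs: "g 2 1 = g 1 2" "g 3 1 = g 1 3" "g 4 1 = g 1 4" "g 3 2 = g 2 3" "g 4 2 = g 2 4" "g 4 3 = g 3 4"
begin

definition "A3 = -2 * g 1 2 * g 1 3 * g 2 3"
definition "C3 = g 1 2 * (g 1 2 * g 3 4 - g 1 3 * g 2 4 - g 1 4 * g 2 3)"
definition "U1 = lc v 1 1 0 0"
definition "U2 = lc v 1 (-1) 0 0"
definition "U3 = lc v (- g 2 3) (- g 1 3) (g 1 2) 0"
definition "U4 = lc v (A3*(- g 2 4) - C3*(- g 2 3)) (A3*(- g 1 4) - C3*(- g 1 3)) (- C3*g 1 2) (A3*g 1 2)"
definition "QQ = Qf (g 1 2 * g 3 4) (g 1 3 * g 2 4) (g 1 4 * g 2 3)"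

lemmas B = bform_lc[OF gv]

lemma gram_vals:
  "bform M U1 U1 = 2 * g 1 2" "bform M U2 U2 = -2 * g 1 2" "bform M U3 U3 = A3"
  "bform M U4 U4 = 2 * g 1 2^3 * g 1 3 * g 2 3 * QQ"
  "bform M U1 U2 = 0" "bform M U1 U3 = 0" "bform M U1 U4 = 0"
  "bform M U2 U1 = 0" "bform M U2 U3 = 0" "bform M U2 U4 = 0"
  "bform M U3 U1 = 0" "bform M U3 U2 = 0" "bform M U3 U4 = 0"
  "bform M U4 U1 = 0" "bform M U4 U2 = 0" "bform M U4 U3 = 0"
  unfolding U1_def U2_def U3_def U4_def B g0 gs A3_def C3_def QQ_def Qf_def
  by (simp_all add: algebra_simps power3_eq_cube)


lemma gram_LI:
  assumes LI: "\<forall>x1 x2 x3 x4. lc v x1 x2 x3 x4 = 0 \<longrightarrow> x1 = 0 \<and> x2 = 0 \<and> x3 = 0 \<and> x4 = 0"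
  and nz: "g 1 2 \<noteq> 0" "g 1 3 \<noteq> 0" "g 2 3 \<noteq> 0"
  and eq: "y1 *\<^sub>R U1 + y2 *\<^sub>R U2 + y3 *\<^sub>R U3 + y4 *\<^sub>R U4 = 0"
  shows "y1 = 0 \<and> y2 = 0 \<and> y3 = 0 \<and> y4 = 0"
proof -
  let ?c1 = "y1 + y2 + y3 * (- g 2 3) + y4 * (A3*(- g 2 4) - C3*(- g 2 3))"
  let ?c2 = "y1 - y2 + y3 * (- g 1 3) + y4 * (A3*(- g 1 4) - C3*(- g 1 3))"
  let ?c3 = "y3 * g 1 2 + y4 * (- C3*g 1 2)"
  let ?c4 = "y4 * (A3 * g 1 2)"
  have "y1 *\<^sub>R U1 + y2 *\<^sub>R U2 + y3 *\<^sub>R U3 + y4 *\<^sub>R U4 = lc v ?c1 ?c2 ?c3 ?c4"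
    unfolding U1_def U2_def U3_def U4_def lc_def by (simp add: algebra_simps)
  with eq LI have c: "?c1 = 0" "?c2 = 0" "?c3 = 0" "?c4 = 0" by metis+
  have "A3 \<noteq> 0" using nz by (simp add: A3_def)
  with c(4) nz have y4: "y4 = 0" by simp
  with c(3) nz have y3: "y3 = 0" by simp
  from c(1,2) y3 y4 have "y1 = 0" "y2 = 0" by simp_all
  with y3 y4 show ?thesis by simp
qed

end

lemma matrix_cols_mult:
  fixes W :: "4 \<Rightarrow> real^4"
  shows "(\<chi> r a. W a $ r) *v y = (\<Sum>a\<in>UNIV. y$a *\<^sub>R W a)"
  by (simp add: vec_eq_iff matrix_vector_mult_def sum_component mult.commute)

lemma matrix_cols_gram:
  fixes W :: "4 \<Rightarrow> real^4"
  shows "(transpose (\<chi> r a. W a $ r) ** M ** (\<chi> r a. W a $ r)) $ a $ b = bform M (W a) (W b)"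
  by (simp add: bform_def matrix_matrix_mult_def transpose_def inner_vec_def matrix_vector_mult_def
      sum_distrib_left sum_distrib_right mult.assoc mult.left_commute)
    (rule sum.swap)


lemma diag4:
  fixes X1 X2 X3 X4 :: "real^4"
  assumes LI: "\<forall>y1 y2 y3 y4. y1 *\<^sub>R X1 + y2 *\<^sub>R X2 + y3 *\<^sub>R X3 + y4 *\<^sub>R X4 = 0 \<longrightarrow> y1 = 0 \<and> y2 = 0 \<and> y3 = 0 \<and> y4 = 0"
  and G: "bform M X1 X1 = d1" "bform M X2 X2 = d2" "bform M X3 X3 = d3" "bform M X4 X4 = d4"
    "bform M X1 X2 = 0" "bform M X1 X3 = 0" "bform M X1 X4 = 0"
    "bform M X2 X1 = 0" "bform M X2 X3 = 0" "bform M X2 X4 = 0"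
    "bform M X3 X1 = 0" "bform M X3 X2 = 0" "bform M X3 X4 = 0"
    "bform M X4 X1 = 0" "bform M X4 X2 = 0" "bform M X4 X3 = 0"
  shows "congruent_to M (diag_mat (vector [d1, d2, d3, d4]))"
proof -
  define W :: "4 \<Rightarrow> real^4" where "W a = (if a = 1 then X1 else if a = 2 then X2 else if a = 3 then X3 else X4)" for a
  define P where "P = (\<chi> r a. W a $ r)"
  have inv: "invertible P"
    unfolding invertible_left_inverse matrix_left_invertible_ker
  proof (intro allI impI)
    fix y assume "P *v y = 0"
    hence "y$1 *\<^sub>R X1 + y$2 *\<^sub>R X2 + y$3 *\<^sub>R X3 + y$4 *\<^sub>R X4 = 0"
      unfolding P_def matrix_cols_mult sum_4 W_def by simp
    with LI have "y$1 = 0 \<and> y$2 = 0 \<and> y$3 = 0 \<and> y$4 = 0" by blast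
    thus "y = 0" by (simp add: vec_eq_iff forall_4)
  qed
  have "\<And>a b. (transpose P ** M ** P) $ a $ b = diag_mat (vector [d1, d2, d3, d4]) $ a $ b"
    unfolding P_def matrix_cols_gram diag_mat_def
    apply (simp only: vec_lambda_beta)
    subgoal for a b using exhaust_4[of a] exhaust_4[of b] by (auto simp: W_def G vector_4)
    done
  hence "transpose P ** M ** P = diag_mat (vector [d1, d2, d3, d4])" by (simp add: vec_eq_iff)
  with inv show ?thesis unfolding congruent_to_def by blast
qed

lemma congr_det:
  assumes "congruent_to M (diag_mat (vector [d1, d2, d3, d4]))"
  shows "\<exists>k>0. det M * k = d1 * d2 * d3 * d4"
proof -
  obtain P where P: "invertible P" "transpose P ** M ** P = diag_mat (vector [d1, d2, d3, d4])"
    using assms unfolding congruent_to_def by blast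
  have "det (diag_mat (vector [d1, d2, d3, d4]) :: real^4^4) = d1 * d2 * d3 * d4"
    apply (subst det_diagonal) apply (simp add: diag_mat_def)
    unfolding UNIV_4 diag_mat_def by (simp add: vector_4)
  moreover have "det (transpose P ** M ** P) = det M * (det P)^2"
    by (simp add: det_mul det_transpose power2_eq_square)
  moreover have "det P \<noteq> 0" using P(1) invertible_det_nz by blast
  ultimately show ?thesis using P(2) by (intro exI[of _ "(det P)^2"]) auto
qed



lemma LI_v:
  assumes "\<not> coplanar v"
  shows "\<forall>x1 x2 x3 x4. lc v x1 x2 x3 x4 = 0 \<longrightarrow> x1 = 0 \<and> x2 = 0 \<and> x3 = 0 \<and> x4 = 0"
proof (intro allI impI)
  fix x1 x2 x3 x4 assume h: "lc v x1 x2 x3 x4 = 0"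
  define VV :: "4 \<Rightarrow> real^4" where "VV a = (if a = 1 then v 1 else if a = 2 then v 2 else if a = 3 then v 3 else v 4)" for a
  define V where "V = (\<chi> r a. VV a $ r)"
  have "\<exists>B. B ** transpose V = mat 1"
    unfolding matrix_left_invertible_ker
  proof (intro allI impI)
    fix e :: "real^4" assume "transpose V *v e = 0"
    hence "\<forall>a. VV a \<bullet> e = 0"
      by (simp add: vec_eq_iff V_def transpose_def matrix_vector_mult_def inner_vec_def mult.commute)
    hence "VV 1 \<bullet> e = 0" "VV 2 \<bullet> e = 0" "VV 3 \<bullet> e = 0" "VV 4 \<bullet> e = 0" by blast+
    hence "\<forall>m\<in>idx. ev e (v m) = 0"
      by (auto simp: idx_iff ev_def VV_def inner_commute)
    thus "e = 0" using assms unfolding coplanar_def by blast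
  qed
  then obtain B where "B ** transpose V = mat 1" by blast
  hence "transpose (B ** transpose V) = mat 1" by (simp add: transpose_mat)
  hence "V ** transpose B = mat 1" by (simp add: matrix_transpose_mul)
  hence "transpose B ** V = mat 1" using matrix_left_right_inverse by blast
  hence ker: "\<forall>y. V *v y = 0 \<longrightarrow> y = 0" using matrix_left_invertible_ker by blast
  have "V *v vector [x1, x2, x3, x4] = lc v x1 x2 x3 x4"
    unfolding V_def matrix_cols_mult sum_4 by (simp add: VV_def vector_4 lc_def)
  with h ker have "vector [x1, x2, x3, x4] = (0::real^4)" by simp
  thus "x1 = 0 \<and> x2 = 0 \<and> x3 = 0 \<and> x4 = 0"
    by (metis vector_4 zero_index)
qed



lemma diag4_gen:
  fixes X1 X2 X3 X4 :: "real^4"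
  assumes LI: "\<forall>y1 y2 y3 y4. y1 *\<^sub>R X1 + y2 *\<^sub>R X2 + y3 *\<^sub>R X3 + y4 *\<^sub>R X4 = 0 \<longrightarrow> y1 = 0 \<and> y2 = 0 \<and> y3 = 0 \<and> y4 = 0"
  and G: "bform M X1 X1 = q1" "bform M X2 X2 = q2" "bform M X3 X3 = q3" "bform M X4 X4 = q4"
    "bform M X1 X2 = 0" "bform M X1 X3 = 0" "bform M X1 X4 = 0"
    "bform M X2 X1 = 0" "bform M X2 X3 = 0" "bform M X2 X4 = 0"
    "bform M X3 X1 = 0" "bform M X3 X2 = 0" "bform M X3 X4 = 0"
    "bform M X4 X1 = 0" "bform M X4 X2 = 0" "bform M X4 X3 = 0"
  and k: "k1 \<noteq> 0" "k2 \<noteq> 0" "k3 \<noteq> 0" "k4 \<noteq> 0"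
  shows "congruent_to M (diag_mat (vector [k1*k1*q1, k2*k2*q2, k3*k3*q3, k4*k4*q4]))"
proof (rule diag4)
  show "\<forall>y1 y2 y3 y4. y1 *\<^sub>R k1 *\<^sub>R X1 + y2 *\<^sub>R k2 *\<^sub>R X2 + y3 *\<^sub>R k3 *\<^sub>R X3 + y4 *\<^sub>R k4 *\<^sub>R X4 = 0 \<longrightarrow>
         y1 = 0 \<and> y2 = 0 \<and> y3 = 0 \<and> y4 = 0"
  proof (intro allI impI)
    fix y1 y2 y3 y4 assume "y1 *\<^sub>R k1 *\<^sub>R X1 + y2 *\<^sub>R k2 *\<^sub>R X2 + y3 *\<^sub>R k3 *\<^sub>R X3 + y4 *\<^sub>R k4 *\<^sub>R X4 = 0"
    hence "(y1*k1) *\<^sub>R X1 + (y2*k2) *\<^sub>R X2 + (y3*k3) *\<^sub>R X3 + (y4*k4) *\<^sub>R X4 = 0" by simp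
    with LI have "y1*k1 = 0 \<and> y2*k2 = 0 \<and> y3*k3 = 0 \<and> y4*k4 = 0" by blast
    with k show "y1 = 0 \<and> y2 = 0 \<and> y3 = 0 \<and> y4 = 0" by simp
  qed
qed (simp_all add: bform_scale_left bform_scale_right G)

lemma sq_norm: "q \<noteq> 0 \<Longrightarrow> (1/sqrt \<bar>q\<bar>) * (1/sqrt \<bar>q\<bar>) * q = sgn q"
  by (simp add: real_sqrt_mult[symmetric] sgn_if)

lemma LI_perm:
  fixes X1 X2 X3 X4 :: "real^4"
  assumes L: "\<forall>y1 y2 y3 y4. y1 *\<^sub>R X1 + y2 *\<^sub>R X2 + y3 *\<^sub>R X3 + y4 *\<^sub>R X4 = 0 \<longrightarrow> y1 = 0 \<and> y2 = 0 \<and> y3 = 0 \<and> y4 = 0"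
  shows "\<forall>y1 y2 y3 y4. y1 *\<^sub>R X2 + y2 *\<^sub>R X1 + y3 *\<^sub>R X3 + y4 *\<^sub>R X4 = 0 \<longrightarrow> y1 = 0 \<and> y2 = 0 \<and> y3 = 0 \<and> y4 = 0"
    "\<forall>y1 y2 y3 y4. y1 *\<^sub>R X1 + y2 *\<^sub>R X3 + y3 *\<^sub>R X4 + y4 *\<^sub>R X2 = 0 \<longrightarrow> y1 = 0 \<and> y2 = 0 \<and> y3 = 0 \<and> y4 = 0"
    "\<forall>y1 y2 y3 y4. y1 *\<^sub>R X2 + y2 *\<^sub>R X3 + y3 *\<^sub>R X4 + y4 *\<^sub>R X1 = 0 \<longrightarrow> y1 = 0 \<and> y2 = 0 \<and> y3 = 0 \<and> y4 = 0"
    "\<forall>y1 y2 y3 y4. y1 *\<^sub>R X1 + y2 *\<^sub>R X3 + y3 *\<^sub>R X2 + y4 *\<^sub>R X4 = 0 \<longrightarrow> y1 = 0 \<and> y2 = 0 \<and> y3 = 0 \<and> y4 = 0"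
    "\<forall>y1 y2 y3 y4. y1 *\<^sub>R X2 + y2 *\<^sub>R X3 + y3 *\<^sub>R X1 + y4 *\<^sub>R X4 = 0 \<longrightarrow> y1 = 0 \<and> y2 = 0 \<and> y3 = 0 \<and> y4 = 0"
proof -
  show "\<forall>y1 y2 y3 y4. y1 *\<^sub>R X2 + y2 *\<^sub>R X1 + y3 *\<^sub>R X3 + y4 *\<^sub>R X4 = 0 \<longrightarrow> y1 = 0 \<and> y2 = 0 \<and> y3 = 0 \<and> y4 = 0"
  proof (intro allI impI)
    fix y1 y2 y3 y4 assume h: "y1 *\<^sub>R X2 + y2 *\<^sub>R X1 + y3 *\<^sub>R X3 + y4 *\<^sub>R X4 = 0"
    have "y2 *\<^sub>R X1 + y1 *\<^sub>R X2 + y3 *\<^sub>R X3 + y4 *\<^sub>R X4 = 0" using h by (simp add: ac_simps)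
    from L[rule_format, OF this] show "y1 = 0 \<and> y2 = 0 \<and> y3 = 0 \<and> y4 = 0" by blast
  qed
  show "\<forall>y1 y2 y3 y4. y1 *\<^sub>R X1 + y2 *\<^sub>R X3 + y3 *\<^sub>R X4 + y4 *\<^sub>R X2 = 0 \<longrightarrow> y1 = 0 \<and> y2 = 0 \<and> y3 = 0 \<and> y4 = 0"
  proof (intro allI impI)
    fix y1 y2 y3 y4 assume h: "y1 *\<^sub>R X1 + y2 *\<^sub>R X3 + y3 *\<^sub>R X4 + y4 *\<^sub>R X2 = 0"
    have "y1 *\<^sub>R X1 + y4 *\<^sub>R X2 + y2 *\<^sub>R X3 + y3 *\<^sub>R X4 = 0" using h by (simp add: ac_simps)
    from L[rule_format, OF this] show "y1 = 0 \<and> y2 = 0 \<and> y3 = 0 \<and> y4 = 0" by blast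
  qed
  show "\<forall>y1 y2 y3 y4. y1 *\<^sub>R X2 + y2 *\<^sub>R X3 + y3 *\<^sub>R X4 + y4 *\<^sub>R X1 = 0 \<longrightarrow> y1 = 0 \<and> y2 = 0 \<and> y3 = 0 \<and> y4 = 0"
  proof (intro allI impI)
    fix y1 y2 y3 y4 assume h: "y1 *\<^sub>R X2 + y2 *\<^sub>R X3 + y3 *\<^sub>R X4 + y4 *\<^sub>R X1 = 0"
    have "y4 *\<^sub>R X1 + y1 *\<^sub>R X2 + y2 *\<^sub>R X3 + y3 *\<^sub>R X4 = 0" using h by (simp add: ac_simps)
    from L[rule_format, OF this] show "y1 = 0 \<and> y2 = 0 \<and> y3 = 0 \<and> y4 = 0" by blast
  qed
  show "\<forall>y1 y2 y3 y4. y1 *\<^sub>R X1 + y2 *\<^sub>R X3 + y3 *\<^sub>R X2 + y4 *\<^sub>R X4 = 0 \<longrightarrow> y1 = 0 \<and> y2 = 0 \<and> y3 = 0 \<and> y4 = 0"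
  proof (intro allI impI)
    fix y1 y2 y3 y4 assume h: "y1 *\<^sub>R X1 + y2 *\<^sub>R X3 + y3 *\<^sub>R X2 + y4 *\<^sub>R X4 = 0"
    have "y1 *\<^sub>R X1 + y3 *\<^sub>R X2 + y2 *\<^sub>R X3 + y4 *\<^sub>R X4 = 0" using h by (simp add: ac_simps)
    from L[rule_format, OF this] show "y1 = 0 \<and> y2 = 0 \<and> y3 = 0 \<and> y4 = 0" by blast
  qed
  show "\<forall>y1 y2 y3 y4. y1 *\<^sub>R X2 + y2 *\<^sub>R X3 + y3 *\<^sub>R X1 + y4 *\<^sub>R X4 = 0 \<longrightarrow> y1 = 0 \<and> y2 = 0 \<and> y3 = 0 \<and> y4 = 0"
  proof (intro allI impI)
    fix y1 y2 y3 y4 assume h: "y1 *\<^sub>R X2 + y2 *\<^sub>R X3 + y3 *\<^sub>R X1 + y4 *\<^sub>R X4 = 0"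
    have "y3 *\<^sub>R X1 + y1 *\<^sub>R X2 + y2 *\<^sub>R X3 + y4 *\<^sub>R X4 = 0" using h by (simp add: ac_simps)
    from L[rule_format, OF this] show "y1 = 0 \<and> y2 = 0 \<and> y3 = 0 \<and> y4 = 0" by blast
  qed
qed

context gram begin

lemma LI_U:
  assumes LI: "\<forall>x1 x2 x3 x4. lc v x1 x2 x3 x4 = 0 \<longrightarrow> x1 = 0 \<and> x2 = 0 \<and> x3 = 0 \<and> x4 = 0"
  and nz: "g 1 2 \<noteq> 0" "g 1 3 \<noteq> 0" "g 2 3 \<noteq> 0"
  shows "\<forall>y1 y2 y3 y4. y1 *\<^sub>R U1 + y2 *\<^sub>R U2 + y3 *\<^sub>R U3 + y4 *\<^sub>R U4 = 0 \<longrightarrow> y1 = 0 \<and> y2 = 0 \<and> y3 = 0 \<and> y4 = 0"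
  using gram_LI[OF LI nz] by blast

lemma gram_types:
  assumes LI: "\<forall>x1 x2 x3 x4. lc v x1 x2 x3 x4 = 0 \<longrightarrow> x1 = 0 \<and> x2 = 0 \<and> x3 = 0 \<and> x4 = 0"
  and nz: "g 1 2 \<noteq> 0" "g 1 3 \<noteq> 0" "g 2 3 \<noteq> 0"
  and sg: "g 1 2 * g 1 3 * g 2 3 < 0"
  shows "QQ < 0 \<Longrightarrow> congruent_to M (diag_mat (vector [1,1,1,-1]))"
    and "QQ > 0 \<Longrightarrow> congruent_to M (diag_mat (vector [1,1,-1,-1]))"
    and "QQ = 0 \<Longrightarrow> congruent_to M (diag_mat (vector [1,1,-1,0]))"
proof -
  note L = LI_perm[OF LI_U[OF LI nz]]
  note GV = gram_vals
  define q4 where "q4 = 2 * g 1 2^3 * g 1 3 * g 2 3 * QQ"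
  have q4: "q4 = 2 * g 1 2^2 * (g 1 2 * g 1 3 * g 2 3) * QQ" unfolding q4_def by (simp add: power2_eq_square power3_eq_cube)
  have A3: "A3 > 0" using sg by (simp add: A3_def)
  have g2: "g 1 2^2 > 0" using nz by simp
  have n: "\<And>q::real. q \<noteq> 0 \<Longrightarrow> 1/sqrt \<bar>q\<bar> \<noteq> 0" by simp
  note GV' = GV[folded q4_def]
  have sA: "sgn A3 = 1" using A3 by simp
  have s1: "g 1 2 > 0 \<Longrightarrow> sgn (2 * g 1 2) = 1" "g 1 2 > 0 \<Longrightarrow> sgn (-2 * g 1 2) = -1"
    and s2: "g 1 2 < 0 \<Longrightarrow> sgn (2 * g 1 2) = -1" "g 1 2 < 0 \<Longrightarrow> sgn (-2 * g 1 2) = 1" by (simp_all add: sgn_if)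
  have nz1: "2 * g 1 2 \<noteq> 0" "-2 * g 1 2 \<noteq> 0" "A3 \<noteq> 0" using nz A3 by auto
  { assume Q: "QQ < 0"
    have "(g 1 2 * g 1 3 * g 2 3) * QQ > 0" by (rule mult_neg_neg[OF sg Q])
    hence "q4 > 0" unfolding q4 using g2 by (metis mult_pos_pos mult.assoc zero_less_numeral)
    hence s4: "sgn q4 = 1" "q4 \<noteq> 0" by auto
    show "congruent_to M (diag_mat (vector [1,1,1,-1]))"
    proof (cases "g 1 2 > 0")
      case True
      show ?thesis using diag4_gen[OF L(2) GV'(1,3,4,2, 6,7,5, 11,13,12, 14,16,15, 8,9,10) n[OF nz1(1)] n[OF nz1(3)] n[OF s4(2)] n[OF nz1(2)]] unfolding sq_norm[OF nz1(1)] sq_norm[OF nz1(3)] sq_norm[OF s4(2)] sq_norm[OF nz1(2)] s1[OF True] sA s4 mult_1 mult_1_right by simp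
    next
      case False
      hence F: "g 1 2 < 0" using nz by simp
      show ?thesis using diag4_gen[OF L(3) GV'(2,3,4,1, 9,10,8, 12,13,11, 15,16,14, 5,6,7) n[OF nz1(2)] n[OF nz1(3)] n[OF s4(2)] n[OF nz1(1)]] unfolding sq_norm[OF nz1(2)] sq_norm[OF nz1(3)] sq_norm[OF s4(2)] sq_norm[OF nz1(1)] s2[OF F] sA s4 mult_1 mult_1_right by simp
    qed }
  { assume Q: "QQ > 0"
    have "(g 1 2 * g 1 3 * g 2 3) * QQ < 0" by (rule mult_neg_pos[OF sg Q])
    hence "q4 < 0" unfolding q4 using g2 by (metis mult_pos_neg mult.assoc zero_less_numeral mult_pos_pos)
    hence s4: "sgn q4 = -1" "q4 \<noteq> 0" by auto
    show "congruent_to M (diag_mat (vector [1,1,-1,-1]))"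
    proof (cases "g 1 2 > 0")
      case True
      show ?thesis using diag4_gen[OF L(4) GV'(1,3,2,4, 6,5,7, 11,12,13, 8,9,10, 14,16,15) n[OF nz1(1)] n[OF nz1(3)] n[OF nz1(2)] n[OF s4(2)]] unfolding sq_norm[OF nz1(1)] sq_norm[OF nz1(3)] sq_norm[OF nz1(2)] sq_norm[OF s4(2)] s1[OF True] sA s4 mult_1 mult_1_right by simp
    next
      case False
      hence F: "g 1 2 < 0" using nz by simp
      show ?thesis using diag4_gen[OF L(5) GV'(2,3,1,4, 9,8,10, 12,11,13, 5,6,7, 15,16,14) n[OF nz1(2)] n[OF nz1(3)] n[OF nz1(1)] n[OF s4(2)]] unfolding sq_norm[OF nz1(2)] sq_norm[OF nz1(3)] sq_norm[OF nz1(1)] sq_norm[OF s4(2)] s2[OF F] sA s4 mult_1 mult_1_right by simp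
    qed }
  { assume Q: "QQ = 0"
    hence s4: "q4 = 0" unfolding q4 by simp
    show "congruent_to M (diag_mat (vector [1,1,-1,0]))"
    proof (cases "g 1 2 > 0")
      case True
      show ?thesis using diag4_gen[OF L(4) GV'(1,3,2,4, 6,5,7, 11,12,13, 8,9,10, 14,16,15) n[OF nz1(1)] n[OF nz1(3)] n[OF nz1(2)] one_neq_zero]
        unfolding sq_norm[OF nz1(1)] sq_norm[OF nz1(3)] sq_norm[OF nz1(2)] s1[OF True] sA s4 mult_1 mult_1_right by simp
    next
      case False
      hence F: "g 1 2 < 0" using nz by simp
      show ?thesis using diag4_gen[OF L(5) GV'(2,3,1,4, 9,8,10, 12,11,13, 5,6,7, 15,16,14) n[OF nz1(2)] n[OF nz1(3)] n[OF nz1(1)] one_neq_zero]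
        unfolding sq_norm[OF nz1(2)] sq_norm[OF nz1(3)] sq_norm[OF nz1(1)] s2[OF F] sA s4 mult_1 mult_1_right by simp
    qed }
qed

lemma gram_det:
  assumes LI: "\<forall>x1 x2 x3 x4. lc v x1 x2 x3 x4 = 0 \<longrightarrow> x1 = 0 \<and> x2 = 0 \<and> x3 = 0 \<and> x4 = 0"
  and nz: "g 1 2 \<noteq> 0" "g 1 3 \<noteq> 0" "g 2 3 \<noteq> 0"
  shows "\<exists>k>0. det M * k = 16 * g 1 2^6 * g 1 3^2 * g 2 3^2 * QQ"
proof -
  have c: "congruent_to M (diag_mat (vector [1*1*(2 * g 1 2), 1*1*(-2 * g 1 2), 1*1*A3, 1*1*(2 * g 1 2^3 * g 1 3 * g 2 3 * QQ)]))"
    by (rule diag4_gen[OF LI_U[OF LI nz] gram_vals one_neq_zero one_neq_zero one_neq_zero one_neq_zero])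
  obtain k where "k > 0" "det M * k = (2 * g 1 2) * (-2 * g 1 2) * A3 * (2 * g 1 2^3 * g 1 3 * g 2 3 * QQ)"
    using congr_det[OF c] by auto
  moreover have "(2 * g 1 2) * (-2 * g 1 2) * A3 * (2 * g 1 2^3 * g 1 3 * g 2 3 * QQ) = 16 * g 1 2^6 * g 1 3^2 * g 2 3^2 * QQ"
    unfolding A3_def by (simp add: eval_nat_numeral algebra_simps)
  ultimately show ?thesis by metis
qed

end



lemma ef_props:
  assumes "edge_face (i,j,k,l)"
  shows "i \<in> idx \<and> j \<in> idx \<and> k \<in> idx \<and> l \<in> idx \<and> i \<noteq> j \<and> i \<noteq> k \<and> i \<noteq> l \<and> j \<noteq> k \<and> j \<noteq> l \<and> k \<noteq> l"
proof -
  obtain p where p: "p permutes idx" "p 1 = i" "p 2 = j" "p 3 = k" "p 4 = l"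
    using assms unfolding edge_face_def by auto
  have in_: "\<And>x. x \<in> idx \<Longrightarrow> p x \<in> idx" using p(1) by (simp add: permutes_in_image)
  have inj: "\<And>x y. p x = p y \<Longrightarrow> x = y" using p(1) permutes_inj by (metis injD)
  have "1 \<in> idx" "2 \<in> idx" "3 \<in> idx" "4 \<in> idx" by (simp_all add: idx_def)
  hence "i \<in> idx" "j \<in> idx" "k \<in> idx" "l \<in> idx" using in_ p by metis+
  moreover have "i \<noteq> j" using inj[of 1 2] p by force
  moreover have "i \<noteq> k" using inj[of 1 3] p by force
  moreover have "i \<noteq> l" using inj[of 1 4] p by force
  moreover have "j \<noteq> k" using inj[of 2 3] p by force
  moreover have "j \<noteq> l" using inj[of 2 4] p by force
  moreover have "k \<noteq> l" using inj[of 3 4] p by force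
  ultimately show ?thesis by blast
qed

lemma ef_1234: "edge_face (1,2,3,4)"
  unfolding edge_face_def prod.case by (intro exI[of _ id]) (simp add: permutes_id evenperm_id)

lemma ef_1342: "edge_face (1,3,4,2)"
  unfolding edge_face_def prod.case
proof (intro exI[of _ "Transposition.transpose 2 3 \<circ> Transposition.transpose 3 4"] conjI, simp_all)
  show "Transposition.transpose 2 3 \<circ> Transposition.transpose 3 4 permutes idx"
    by (intro permutes_compose permutes_swap_id) (auto simp: idx_def)
  show "evenperm (Transposition.transpose 2 3 \<circ> Transposition.transpose (3::nat) 4)"
    by (simp add: evenperm_comp permutation_swap_id evenperm_swap)
qed

lemma ef_1423: "edge_face (1,4,2,3)"
  unfolding edge_face_def prod.case
proof (intro exI[of _ "Transposition.transpose 3 4 \<circ> Transposition.transpose 2 3"] conjI, simp_all)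
  show "Transposition.transpose 3 4 \<circ> Transposition.transpose 2 3 permutes idx"
    by (intro permutes_compose permutes_swap_id) (auto simp: idx_def)
  show "evenperm (Transposition.transpose 3 4 \<circ> Transposition.transpose (2::nat) 3)"
    by (simp add: evenperm_comp permutation_swap_id evenperm_swap)
qed



lemma row_sign:
  fixes x :: "nat \<Rightarrow> real"
  assumes nz: "\<forall>j\<in>idx. j \<noteq> m \<longrightarrow> x j \<noteq> 0" and xm: "x m = 0"
  and pos: "\<forall>lam. (\<forall>i\<in>idx. lam i > 0) \<longrightarrow> (\<Sum>i\<in>idx. lam i * x i) \<noteq> 0"
  shows "(\<forall>j\<in>idx. j \<noteq> m \<longrightarrow> x j > 0) \<or> (\<forall>j\<in>idx. j \<noteq> m \<longrightarrow> x j < 0)"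
proof (rule ccontr)
  assume "\<not> ?thesis"
  then obtain j k where j: "j \<in> idx" "j \<noteq> m" "\<not> x j > 0" and k: "k \<in> idx" "k \<noteq> m" "\<not> x k < 0"
    by blast
  have "x j \<noteq> 0" "x k \<noteq> 0" using nz j k by auto
  hence jk: "j \<in> idx" "k \<in> idx" "x j < 0" "x k > 0" using j k by auto
  define P where "P = (\<Sum>i\<in>idx. max (x i) 0)"
  define N where "N = (\<Sum>i\<in>idx. max (- x i) 0)"
  have fin: "finite idx" by (simp add: idx_def)
  have "max (x k) 0 \<le> P" unfolding P_def by (rule member_le_sum[OF jk(2) _ fin]) simp
  hence P: "P > 0" using jk by simp
  have "max (- x j) 0 \<le> N" unfolding N_def by (rule member_le_sum[OF jk(1) _ fin]) simp
  hence N: "N > 0" using jk by simp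
  define lam where "lam i = (if x i > 0 then N else P)" for i
  have "\<forall>i\<in>idx. lam i > 0" using P N by (simp add: lam_def)
  with pos have ne: "(\<Sum>i\<in>idx. lam i * x i) \<noteq> 0" by blast
  have "\<And>i. lam i * x i = N * max (x i) 0 - P * max (- x i) 0"
    unfolding lam_def by (cases "x i > 0") (simp_all add: max_def)
  hence "(\<Sum>i\<in>idx. lam i * x i) = N * P - P * N"
    by (simp add: sum_subtractf sum_distrib_left P_def N_def)
  with ne show False by simp
qed

lemma tet_D:
  assumes "tetrahedron_of_flags v eta"
  shows "\<forall>m\<in>idx. v m \<noteq> 0 \<and> eta m \<noteq> 0 \<and> ev (eta m) (v m) = 0"
    "\<forall>i\<in>idx. \<forall>j\<in>idx. ev (eta i) (v j) = 0 \<longleftrightarrow> i = j"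
    "\<not> coplanar v"
    "\<exists>s. sign_choice s \<and> (\<forall>w\<in>tet_interior v s. \<forall>m\<in>idx. ev (eta m) w \<noteq> 0)"
  using conjunct1[OF assms[unfolded tetrahedron_of_flags_def]]
    conjunct1[OF conjunct2[OF assms[unfolded tetrahedron_of_flags_def]]]
    conjunct1[OF conjunct2[OF conjunct2[OF assms[unfolded tetrahedron_of_flags_def]]]]
    conjunct2[OF conjunct2[OF conjunct2[OF assms[unfolded tetrahedron_of_flags_def]]]]
  by this

lemma sign_norm:
  assumes T: "tetrahedron_of_flags v eta"
  obtains s \<epsilon> where "sign_choice s" "\<forall>w\<in>tet_interior v s. \<forall>m\<in>idx. ev (eta m) w \<noteq> 0"
    "\<forall>m\<in>idx. \<epsilon> m = 1 \<or> \<epsilon> m = -1"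
    "\<forall>i\<in>idx. \<forall>j\<in>idx. i \<noteq> j \<longrightarrow> \<epsilon> i * s j * ev (eta i) (v j) > 0"
proof -
  obtain s where s: "sign_choice s" "\<forall>w\<in>tet_interior v s. \<forall>m\<in>idx. ev (eta m) w \<noteq> 0"
    using tet_D(4)[OF T] by blast
  have rs: "(\<forall>j\<in>idx. j \<noteq> m \<longrightarrow> s j * ev (eta m) (v j) > 0) \<or> (\<forall>j\<in>idx. j \<noteq> m \<longrightarrow> s j * ev (eta m) (v j) < 0)"
    if m: "m \<in> idx" for m
  proof (rule row_sign[where x="\<lambda>j. s j * ev (eta m) (v j)"])
    show "\<forall>j\<in>idx. j \<noteq> m \<longrightarrow> s j * ev (eta m) (v j) \<noteq> 0"
    proof (intro ballI impI)
      fix j assume j: "j \<in> idx" "j \<noteq> m"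
      have "ev (eta m) (v j) \<noteq> 0" using tet_D(2)[OF T, rule_format, OF m j(1)] j(2) by simp
      moreover have "s j = 1 \<or> s j = -1" using s(1) j unfolding sign_choice_def by blast
      hence "s j \<noteq> 0" by auto
      ultimately show "s j * ev (eta m) (v j) \<noteq> 0" by simp
    qed
    show "s m * ev (eta m) (v m) = 0" using tet_D(1)[OF T, rule_format, OF m] by simp
    show "\<forall>lam. (\<forall>i\<in>idx. lam i > 0) \<longrightarrow> (\<Sum>i\<in>idx. lam i * (s i * ev (eta m) (v i))) \<noteq> 0"
    proof (intro allI impI)
      fix lam :: "nat \<Rightarrow> real" assume l: "\<forall>i\<in>idx. lam i > 0"
      define w where "w = (\<Sum>i\<in>idx. (lam i * s i) *\<^sub>R v i)"
      have "w \<in> tet_interior v s" unfolding tet_interior_def w_def using l by blast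
      hence "ev (eta m) w \<noteq> 0" using s(2) m by blast
      moreover have "ev (eta m) w = (\<Sum>i\<in>idx. lam i * (s i * ev (eta m) (v i)))"
        unfolding w_def ev_def by (simp add: inner_sum_right mult.assoc)
      ultimately show "(\<Sum>i\<in>idx. lam i * (s i * ev (eta m) (v i))) \<noteq> 0" by simp
    qed
  qed
  define \<epsilon> where "\<epsilon> m = (if (\<forall>j\<in>idx. j \<noteq> m \<longrightarrow> s j * ev (eta m) (v j) > 0) then 1 else -1::real)" for m
  show ?thesis
  proof (rule that[OF s, of \<epsilon>])
    show "\<forall>m\<in>idx. \<epsilon> m = 1 \<or> \<epsilon> m = -1" by (simp add: \<epsilon>_def)
    show "\<forall>i\<in>idx. \<forall>j\<in>idx. i \<noteq> j \<longrightarrow> \<epsilon> i * s j * ev (eta i) (v j) > 0"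
    proof (intro ballI impI)
      fix i j assume "i \<in> idx" "j \<in> idx" "i \<noteq> j"
      thus "\<epsilon> i * s j * ev (eta i) (v j) > 0"
        using rs[of i] unfolding \<epsilon>_def by (auto simp: mult.assoc)
    qed
  qed
qed



definition SYMG :: "(nat \<Rightarrow> real^4) \<Rightarrow> (nat \<Rightarrow> real^4) \<Rightarrow> (nat \<Rightarrow> nat \<Rightarrow> real) \<Rightarrow> (nat \<Rightarrow> real) \<Rightarrow> bool" where
  "SYMG v eta g c \<longleftrightarrow> (\<forall>i\<in>idx. c i \<noteq> 0) \<and> (\<forall>i\<in>idx. \<forall>j\<in>idx. c i * ev (eta i) (v j) = g i j)
     \<and> (\<forall>i\<in>idx. \<forall>j\<in>idx. g i j = g j i) \<and> (\<forall>i\<in>idx. \<forall>j\<in>idx. i \<noteq> j \<longrightarrow> g i j \<noteq> 0)"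

lemma SYMG_a:
  assumes "SYMG v eta g c" "i \<in> idx" "j \<in> idx"
  shows "ev (eta i) (v j) = g i j / c i"
  using assms unfolding SYMG_def by (metis nonzero_mult_div_cancel_left)

lemma SYMG_facts:
  assumes "SYMG v eta g c" "i \<in> idx" "j \<in> idx"
  shows "c i \<noteq> 0" "g j i = g i j" "i \<noteq> j \<Longrightarrow> g i j \<noteq> 0"
  using assms unfolding SYMG_def by metis+

lemma SYMG_triple:
  assumes S: "SYMG v eta g c" and d: "i \<in> idx" "j \<in> idx" "k \<in> idx" "i \<noteq> j" "i \<noteq> k" "j \<noteq> k"
  shows "triple_ratio v eta (i,j,k,l) = 1"
proof -
  note a = SYMG_a[OF S] and f = SYMG_facts[OF S]
  have nz: "g i j \<noteq> 0" "g i k \<noteq> 0" "g j k \<noteq> 0" "c i \<noteq> 0" "c j \<noteq> 0" "c k \<noteq> 0"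
    using f d by metis+
  show ?thesis unfolding triple_ratio_def prod.case
    using d nz by (simp add: a f(2)[of i j] f(2)[of i k] f(2)[of j k] field_simps)
qed

lemma SYMG_edge:
  assumes S: "SYMG v eta g c" and d: "i \<in> idx" "j \<in> idx" "k \<in> idx" "l \<in> idx"
    "i \<noteq> j" "i \<noteq> k" "i \<noteq> l" "j \<noteq> k" "j \<noteq> l" "k \<noteq> l"
  shows "edge_ratio v eta (i,j,k,l) = edge_ratio v eta (ef_op (i,j,k,l))"
proof -
  note a = SYMG_a[OF S] and f = SYMG_facts[OF S]
  have nz: "g i j \<noteq> 0" "g i k \<noteq> 0" "g i l \<noteq> 0" "g j k \<noteq> 0" "g j l \<noteq> 0" "g k l \<noteq> 0"
    "c i \<noteq> 0" "c j \<noteq> 0" "c k \<noteq> 0" "c l \<noteq> 0"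
    using f d by metis+
  show ?thesis unfolding edge_ratio_def ef_op_def prod.case
    using d nz by (simp add: a f(2)[of i j] f(2)[of i k] f(2)[of j k] f(2)[of i l] f(2)[of j l] f(2)[of k l] field_simps)
qed

lemma SYMG_j:
  assumes S: "SYMG v eta g c" and d: "i \<in> idx" "j \<in> idx" "k \<in> idx" "l \<in> idx"
    "i \<noteq> j" "i \<noteq> k" "i \<noteq> l" "j \<noteq> k" "j \<noteq> l" "k \<noteq> l"
  shows "j_inv v eta (i,j,k,l) = - Qf (g i j * g k l) (g i k * g j l) (g i l * g j k) / (4 * (g i l * g j k)^2)"
proof -
  note a = SYMG_a[OF S] and f = SYMG_facts[OF S]
  have nz: "g i j \<noteq> 0" "g i k \<noteq> 0" "g i l \<noteq> 0" "g j k \<noteq> 0" "g j l \<noteq> 0" "g k l \<noteq> 0"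
    "c i \<noteq> 0" "c j \<noteq> 0" "c k \<noteq> 0" "c l \<noteq> 0"
    using f d by metis+
  have t: "triple_ratio v eta (i,j,k,l) = 1" using SYMG_triple[OF S] d by blast
  define x where "x = g i j * g k l"
  define y where "y = g i k * g j l"
  define z where "z = g i l * g j k"
  have e: "edge_ratio v eta (i,j,k,l) = y / z"
    unfolding edge_ratio_def prod.case x_def y_def z_def
    using d nz by (simp add: a f(2)[of i j] f(2)[of i k] f(2)[of j k] f(2)[of i l] f(2)[of j l] f(2)[of k l] field_simps)
  have em: "edge_ratio v eta (ef_minus (i,j,k,l)) = x / y"
    unfolding edge_ratio_def ef_minus_def prod.case x_def y_def z_def
    using d nz by (simp add: a f(2)[of i j] f(2)[of i k] f(2)[of j k] f(2)[of i l] f(2)[of j l] f(2)[of k l] field_simps)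
  have ep: "edge_ratio v eta (ef_plus (i,j,k,l)) = z / x"
    unfolding edge_ratio_def ef_plus_def prod.case x_def y_def z_def
    using d nz by (simp add: a f(2)[of i j] f(2)[of i k] f(2)[of j k] f(2)[of i l] f(2)[of j l] f(2)[of k l] field_simps)
  have xyz: "x \<noteq> 0" "y \<noteq> 0" "z \<noteq> 0" using nz by (simp_all add: x_def y_def z_def)
  have X: "X_inv v eta (i,j,k,l) = (y + z - x) / (2 * z)"
    unfolding X_inv_def mu_inv_def t e em ep using xyz by (simp add: field_simps)
  show ?thesis unfolding j_inv_def X e x_def[symmetric] y_def[symmetric] z_def[symmetric] Qf_def
    using xyz by (simp add: field_simps power2_eq_square)
qed



lemma Qf_c1: "Qf x y z = Qf y x z" by (simp add: Qf_def algebra_simps)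
lemma Qf_c2: "Qf x y z = Qf x z y" by (simp add: Qf_def algebra_simps)

lemma Qf_perm:
  assumes gs: "\<forall>i\<in>idx. \<forall>j\<in>idx. g i j = g j i"
  and d: "i \<in> idx" "j \<in> idx" "k \<in> idx" "l \<in> idx"
    "i \<noteq> j" "i \<noteq> k" "i \<noteq> l" "j \<noteq> k" "j \<noteq> l" "k \<noteq> l"
  shows "Qf (g i j * g k l) (g i k * g j l) (g i l * g j k) = Qf (g 1 2 * g 3 4) (g 1 3 * g 2 4) (g 1 4 * g 2 3)"
proof -
  have s: "g 2 1 = g 1 2" "g 3 1 = g 1 3" "g 4 1 = g 1 4" "g 3 2 = g 2 3" "g 4 2 = g 2 4" "g 4 3 = g 3 4"
    by (rule gs[rule_format]; simp add: idx_def)+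
  have i: "i = 1 \<or> i = 2 \<or> i = 3 \<or> i = 4" and j: "j = 1 \<or> j = 2 \<or> j = 3 \<or> j = 4"
   and k: "k = 1 \<or> k = 2 \<or> k = 3 \<or> k = 4" and l: "l = 1 \<or> l = 2 \<or> l = 3 \<or> l = 4"
    using d by (simp_all add: idx_iff)
  show ?thesis
    using i j k l d(5-10)
    apply (elim disjE)
    apply simp_all
    apply (simp_all add: s[simplified] mult.commute Qf_c1 Qf_c2)
    done
qed




lemma pm1_sq: "(e::real) = 1 \<or> e = -1 \<Longrightarrow> e * e = 1" by auto

lemma ratio_cancel2:
  fixes p q p' q' x y z w :: real
  assumes "p * q = p' * q'" "p' * q' \<noteq> 0"
  shows "(p*x)*(q*y)/((p'*z)*(q'*w)) = x*y/(z*w)"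
proof -
  have "(p*x)*(q*y)/((p'*z)*(q'*w)) = ((p*q)*(x*y))/((p'*q')*(z*w))" by (simp add: algebra_simps)
  also have "\<dots> = x*y/(z*w)" using assms by simp
  finally show ?thesis .
qed

lemma ratio_cancel3:
  fixes p q r p' q' r' x y z x' y' z' :: real
  assumes "p * q * r = p' * q' * r'" "p' * q' * r' \<noteq> 0"
  shows "(p*x)*(q*y)*(r*z)/((p'*x')*(q'*y')*(r'*z')) = x*y*z/(x'*y'*z')"
proof -
  have "(p*x)*(q*y)*(r*z)/((p'*x')*(q'*y')*(r'*z')) = ((p*q*r)*(x*y*z))/((p'*q'*r')*(x'*y'*z'))" by (simp add: algebra_simps)
  also have "\<dots> = x*y*z/(x'*y'*z')" using assms by simp
  finally show ?thesis .
qed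

lemma ln_ratio2: "x > 0 \<Longrightarrow> y > 0 \<Longrightarrow> z > 0 \<Longrightarrow> w > 0 \<Longrightarrow> ln (x*y/(z*w)) = ln x + ln y - ln z - ln (w::real)"
  by (simp add: ln_mult ln_div)
lemma ln_ratio3: "x > 0 \<Longrightarrow> y > 0 \<Longrightarrow> z > 0 \<Longrightarrow> x' > 0 \<Longrightarrow> y' > 0 \<Longrightarrow> z' > 0 \<Longrightarrow>
   ln (x*y*z/(x'*y'*z')) = ln x + ln y + ln z - ln x' - ln y' - ln (z'::real)"
  by (simp add: ln_mult ln_div)

locale normal =
  fixes v eta :: "nat \<Rightarrow> real^4" and s \<epsilon> :: "nat \<Rightarrow> real"
  assumes sg: "\<forall>m\<in>idx. s m = 1 \<or> s m = -1" and eg: "\<forall>m\<in>idx. \<epsilon> m = 1 \<or> \<epsilon> m = -1"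
  and pos: "\<forall>i\<in>idx. \<forall>j\<in>idx. i \<noteq> j \<longrightarrow> \<epsilon> i * s j * ev (eta i) (v j) > 0"
begin

definition "b i j = \<epsilon> i * s j * ev (eta i) (v j)"

lemma a_b: "i \<in> idx \<Longrightarrow> j \<in> idx \<Longrightarrow> ev (eta i) (v j) = \<epsilon> i * s j * b i j"
proof -
  assume "i \<in> idx" "j \<in> idx"
  hence "\<epsilon> i * \<epsilon> i = 1" "s j * s j = 1" using sg eg pm1_sq by blast+
  hence "\<epsilon> i * s j * b i j = (\<epsilon> i * \<epsilon> i) * (s j * s j) * ev (eta i) (v j)" unfolding b_def by (simp add: algebra_simps)
  thus ?thesis using \<open>\<epsilon> i * \<epsilon> i = 1\<close> \<open>s j * s j = 1\<close> by simp
qed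

lemma b_pos: "i \<in> idx \<Longrightarrow> j \<in> idx \<Longrightarrow> i \<noteq> j \<Longrightarrow> b i j > 0"
  using pos unfolding b_def by blast

lemma nz1: "i \<in> idx \<Longrightarrow> \<epsilon> i \<noteq> 0" "i \<in> idx \<Longrightarrow> s i \<noteq> 0" using sg eg by force+

lemma edge_b:
  assumes "i \<in> idx" "j \<in> idx" "k \<in> idx" "l \<in> idx"
  shows "edge_ratio v eta (i,j,k,l) = b i k * b j l / (b i l * b j k)"
  unfolding edge_ratio_def prod.case a_b[OF assms(1,3)] a_b[OF assms(2,4)] a_b[OF assms(1,4)] a_b[OF assms(2,3)]
  by (rule ratio_cancel2) (use assms nz1 in auto)

lemma triple_b:
  assumes "i \<in> idx" "j \<in> idx" "k \<in> idx"
  shows "triple_ratio v eta (i,j,k,l) = b i j * b j k * b k i / (b i k * b j i * b k j)"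
  unfolding triple_ratio_def prod.case a_b[OF assms(1,2)] a_b[OF assms(2,3)] a_b[OF assms(3,1)]
    a_b[OF assms(1,3)] a_b[OF assms(2,1)] a_b[OF assms(3,2)]
  by (rule ratio_cancel3) (use assms nz1 in auto)

lemma edge_T3:
  assumes e1: "edge_ratio v eta (1,2,3,4) = edge_ratio v eta (ef_op (1,2,3,4))"
  and e2: "edge_ratio v eta (1,3,4,2) = edge_ratio v eta (ef_op (1,3,4,2))"
  and e3: "edge_ratio v eta (1,4,2,3) = edge_ratio v eta (ef_op (1,4,2,3))"
  shows "triple_ratio v eta (1,2,3,4) = 1" "triple_ratio v eta (1,3,4,2) = 1" "triple_ratio v eta (1,4,2,3) = 1"
proof -
  have I: "1 \<in> idx" "2 \<in> idx" "3 \<in> idx" "4 \<in> idx" by (simp_all add: idx_def)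
  have p: "b 1 2 > 0" "b 1 3 > 0" "b 1 4 > 0" "b 2 1 > 0" "b 2 3 > 0" "b 2 4 > 0"
      "b 3 1 > 0" "b 3 2 > 0" "b 3 4 > 0" "b 4 1 > 0" "b 4 2 > 0" "b 4 3 > 0"
    by (rule b_pos; simp add: idx_def)+
  define L where "L i j = ln (b i j)" for i j
  have l1: "L 1 3 + L 2 4 - L 1 4 - L 2 3 = L 4 2 + L 3 1 - L 4 1 - L 3 2"
    using arg_cong[OF e1[unfolded ef_op_def prod.case edge_b[OF I(1,2,3,4)] edge_b[OF I(4,3,2,1)]], of ln]
    unfolding L_def using p by (simp add: ln_ratio2)
  have l2: "L 1 4 + L 3 2 - L 1 2 - L 3 4 = L 2 3 + L 4 1 - L 2 1 - L 4 3"
    using arg_cong[OF e2[unfolded ef_op_def prod.case edge_b[OF I(1,3,4,2)] edge_b[OF I(2,4,3,1)]], of ln]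
    unfolding L_def using p by (simp add: ln_ratio2)
  have l3: "L 1 2 + L 4 3 - L 1 3 - L 4 2 = L 3 4 + L 2 1 - L 3 1 - L 2 4"
    using arg_cong[OF e3[unfolded ef_op_def prod.case edge_b[OF I(1,4,2,3)] edge_b[OF I(3,2,4,1)]], of ln]
    unfolding L_def using p by (simp add: ln_ratio2)
  have t: "\<And>x y z x' y' z'. x > 0 \<Longrightarrow> y > 0 \<Longrightarrow> z > 0 \<Longrightarrow> x' > 0 \<Longrightarrow> y' > 0 \<Longrightarrow> z' > 0 \<Longrightarrow>
      ln x + ln y + ln z - ln x' - ln y' - ln z' = 0 \<Longrightarrow> x*y*z/(x'*y'*z') = (1::real)"
    by (metis ln_ratio3 ln_eq_zero_iff divide_pos_pos mult_pos_pos)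
  show "triple_ratio v eta (1,2,3,4) = 1" unfolding triple_b[OF I(1,2,3)]
    by (rule t) (use p l1 l2 l3 in \<open>simp_all add: L_def\<close>)
  show "triple_ratio v eta (1,3,4,2) = 1" unfolding triple_b[OF I(1,3,4)]
    by (rule t) (use p l1 l2 l3 in \<open>simp_all add: L_def\<close>)
  show "triple_ratio v eta (1,4,2,3) = 1" unfolding triple_b[OF I(1,4,2)]
    by (rule t) (use p l1 l2 l3 in \<open>simp_all add: L_def\<close>)
qed


lemma sign_aux:
  fixes ui uj u1 e1 ei x y z :: real
  assumes "ei = 1 \<or> ei = -1" "u1 = 1 \<or> u1 = -1" "y \<noteq> 0"
  shows "ui * uj * (-(e1 * u1) * x / y * z) = -((e1 * ui * x) * (ei * uj * z) / (ei * u1 * y))"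
  using assms by (auto simp: field_simps)

lemma T3_SYMG:
  assumes T: "tetrahedron_of_flags v eta"
  and t1: "triple_ratio v eta (1,2,3,4) = 1" and t2: "triple_ratio v eta (1,3,4,2) = 1"
  and t3: "triple_ratio v eta (1,4,2,3) = 1"
  shows "\<exists>g c. SYMG v eta g c \<and> (\<forall>i\<in>idx. \<forall>j\<in>idx. i \<noteq> j \<longrightarrow> s i * s j * g i j < 0)"
proof -
  define a where "a i j = ev (eta i) (v j)" for i j
  have I: "1 \<in> idx" "2 \<in> idx" "3 \<in> idx" "4 \<in> idx" by (simp_all add: idx_def)
  have anz: "i \<in> idx \<Longrightarrow> j \<in> idx \<Longrightarrow> i \<noteq> j \<Longrightarrow> a i j \<noteq> 0" for i j
    using tet_D(2)[OF T, rule_format, of i j] unfolding a_def by simp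
  have a0: "i \<in> idx \<Longrightarrow> a i i = 0" for i using tet_D(1)[OF T, rule_format, of i] unfolding a_def by simp
  have nz: "a 1 2 \<noteq> 0" "a 1 3 \<noteq> 0" "a 1 4 \<noteq> 0" "a 2 1 \<noteq> 0" "a 2 3 \<noteq> 0" "a 2 4 \<noteq> 0"
      "a 3 1 \<noteq> 0" "a 3 2 \<noteq> 0" "a 3 4 \<noteq> 0" "a 4 1 \<noteq> 0" "a 4 2 \<noteq> 0" "a 4 3 \<noteq> 0"
    by (rule anz; simp add: idx_def)+
  have r1: "a 1 2 * a 2 3 * a 3 1 = a 1 3 * a 2 1 * a 3 2"
    using t1 nz unfolding triple_ratio_def prod.case a_def[symmetric] by (simp add: field_simps)
  have r2: "a 1 3 * a 3 4 * a 4 1 = a 1 4 * a 3 1 * a 4 3"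
    using t2 nz unfolding triple_ratio_def prod.case a_def[symmetric] by (simp add: field_simps)
  have r3: "a 1 4 * a 4 2 * a 2 1 = a 1 2 * a 4 1 * a 2 4"
    using t3 nz unfolding triple_ratio_def prod.case a_def[symmetric] by (simp add: field_simps)
  define \<kappa> where "\<kappa> = -(\<epsilon> 1 * s 1)"
  have knz: "\<kappa> \<noteq> 0" unfolding \<kappa>_def using nz1 I by simp
  define c where "c i = (if i = 1 then \<kappa> else \<kappa> * a 1 i / a i 1)" for i
  define g where "g i j = c i * a i j" for i j
  have cnz: "\<forall>i\<in>idx. c i \<noteq> 0"
  proof
    fix i assume i: "i \<in> idx"
    show "c i \<noteq> 0"
    proof (cases "i = 1")
      case False thus ?thesis using anz[OF I(1) i] anz[OF i I(1)] knz i by (simp add: c_def)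
    qed (simp add: c_def knz)
  qed
  have gsym: "\<forall>i\<in>idx. \<forall>j\<in>idx. g i j = g j i"
  proof (intro ballI)
    fix i j assume "i \<in> idx" "j \<in> idx"
    hence "i = 1 \<or> i = 2 \<or> i = 3 \<or> i = 4" "j = 1 \<or> j = 2 \<or> j = 3 \<or> j = 4" by (simp_all add: idx_iff)
    thus "g i j = g j i"
      apply (elim disjE)
      apply (simp_all add: g_def c_def nz)
      using r1 r2 r3 nz by (simp_all add: field_simps)
  qed
  have sgn: "\<forall>i\<in>idx. \<forall>j\<in>idx. i \<noteq> j \<longrightarrow> s i * s j * g i j < 0"
  proof (intro ballI impI)
    fix i j assume ij: "i \<in> idx" "j \<in> idx" "i \<noteq> j"
    have s1: "s 1 * s 1 = 1" using sg I pm1_sq by blast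
    show "s i * s j * g i j < 0"
    proof (cases "i = 1")
      case True
      have "s i * s j * g i j = - ((s 1 * s 1) * (\<epsilon> 1 * s j * a 1 j))" using True
        unfolding g_def c_def \<kappa>_def by (simp add: algebra_simps)
      also have "\<dots> < 0" using s1 pos ij True unfolding a_def by simp
      finally show ?thesis .
    next
      case False
      have "s i * s j * g i j = -((\<epsilon> 1 * s i * a 1 i) * (\<epsilon> i * s j * a i j) / (\<epsilon> i * s 1 * a i 1))"
      proof -
        have "c i = -(\<epsilon> 1 * s 1) * a 1 i / a i 1" using False by (simp add: c_def \<kappa>_def)
        thus ?thesis unfolding g_def
          by (simp only: sign_aux[OF eg[rule_format, OF ij(1)] sg[rule_format, OF I(1)] anz[OF ij(1) I(1) False]])
      qed
      also have "\<dots> < 0"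
      proof -
        have "\<epsilon> 1 * s i * a 1 i > 0" using pos I(1) ij False unfolding a_def by simp
        moreover have "\<epsilon> i * s j * a i j > 0" using pos ij unfolding a_def by simp
        moreover have "\<epsilon> i * s 1 * a i 1 > 0" using pos I(1) ij False unfolding a_def by simp
        ultimately have "(\<epsilon> 1 * s i * a 1 i) * (\<epsilon> i * s j * a i j) / (\<epsilon> i * s 1 * a i 1) > 0"
          by (rule divide_pos_pos[OF mult_pos_pos])
        thus ?thesis by linarith
      qed
      finally show ?thesis .
    qed
  qed
  have "SYMG v eta g c"
    unfolding SYMG_def
  proof (intro conjI)
    show "\<forall>i\<in>idx. \<forall>j\<in>idx. c i * ev (eta i) (v j) = g i j" by (simp add: g_def a_def)
    show "\<forall>i\<in>idx. \<forall>j\<in>idx. i \<noteq> j \<longrightarrow> g i j \<noteq> 0" using sgn by force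
  qed (use cnz gsym in auto)
  with sgn show ?thesis by blast
qed

end



definition nidx :: "4 \<Rightarrow> nat" where
  "nidx a = (if a = 1 then 1 else if a = 2 then 2 else if a = 3 then 3 else 4)"
definition Vmat :: "(nat \<Rightarrow> real^4) \<Rightarrow> real^4^4" where
  "Vmat v = (\<chi> r a. v (nidx a) $ r)"

lemma nidx_in: "nidx a \<in> idx" by (simp add: nidx_def idx_def)
lemma nidx_of: "m \<in> idx \<Longrightarrow> nidx (of_nat m) = m"
  by (auto simp: idx_iff nidx_def)

lemma Vmat_axis: "Vmat v *v axis a 1 = v (nidx a)"
proof -
  have "Vmat v *v axis a 1 = (\<Sum>b\<in>UNIV. (axis a 1 :: real^4) $ b *\<^sub>R v (nidx b))"
    unfolding Vmat_def by (rule matrix_cols_mult)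
  also have "\<dots> = (\<Sum>b\<in>UNIV. if a = b then v (nidx b) else 0)"
    by (rule sum.cong) (simp_all add: axis_def)
  also have "\<dots> = v (nidx a)" by (subst sum.delta') simp_all
  finally show ?thesis .
qed

lemma Vmat_inv:
  assumes "\<not> coplanar v"
  shows "invertible (Vmat v)"
proof -
  have "\<exists>B. B ** transpose (Vmat v) = mat 1"
    unfolding matrix_left_invertible_ker
  proof (intro allI impI)
    fix e :: "real^4" assume "transpose (Vmat v) *v e = 0"
    hence h: "\<forall>a. v (nidx a) \<bullet> e = 0"
      by (simp add: vec_eq_iff Vmat_def transpose_def matrix_vector_mult_def inner_vec_def mult.commute)
    have "\<forall>m\<in>idx. ev e (v m) = 0"
    proof
      fix m assume "m \<in> idx"
      with h[rule_format, of "of_nat m"] show "ev e (v m) = 0" by (simp add: nidx_of ev_def inner_commute)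
    qed
    thus "e = 0" using assms unfolding coplanar_def by blast
  qed
  then obtain B where "B ** transpose (Vmat v) = mat 1" by blast
  hence "transpose (B ** transpose (Vmat v)) = mat 1" by (simp add: transpose_mat)
  hence "Vmat v ** transpose B = mat 1" by (simp add: matrix_transpose_mul)
  thus ?thesis using invertible_right_inverse by blast
qed

lemma construct_M:
  assumes T: "tetrahedron_of_flags v eta" and S: "SYMG v eta g c"
  and sc: "sign_choice s"
  and sgn: "\<forall>i\<in>idx. \<forall>j\<in>idx. i \<noteq> j \<longrightarrow> s i * s j * g i j < 0"
  shows "\<exists>M. inscribed_in v eta M \<and> (hyperbolic_form M \<or> ads_form M \<or> halfpipe_form M)"
proof -
  define V where "V = Vmat v"
  obtain W where W: "W ** V = mat 1" "V ** W = mat 1"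
    using Vmat_inv[OF tet_D(3)[OF T]] unfolding V_def invertible_def by blast
  define F :: "real^4^4" where "F = (\<chi> a b. c (nidx a) * eta (nidx a) $ b)"
  define M where "M = transpose W ** F"
  have Fv: "(F *v y) $ a = c (nidx a) * ev (eta (nidx a)) y" for y a
    by (simp add: F_def matrix_vector_mult_def ev_def inner_vec_def sum_distrib_left mult.assoc)
  have bM: "bform M x y = (F *v y) \<bullet> (W *v x)" for x y
    unfolding bform_def M_def
    by (simp add: matrix_vector_mul_assoc[symmetric] dot_lmul_matrix[symmetric] inner_commute)
  have Wv: "W *v v m = axis (of_nat m) 1" if "m \<in> idx" for m
  proof -
    have "v m = V *v axis (of_nat m) 1" unfolding V_def Vmat_axis nidx_of[OF that] ..
    hence "W *v v m = (W ** V) *v axis (of_nat m) 1" by (simp add: matrix_vector_mul_assoc)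
    thus ?thesis using W(1) by simp
  qed
  have bMv: "bform M (v m) y = c m * ev (eta m) y" if "m \<in> idx" for m y
    unfolding bM Wv[OF that] by (simp add: inner_axis Fv nidx_of[OF that])
  note a = SYMG_a[OF S] and f = SYMG_facts[OF S]
  have gv: "\<forall>i\<in>idx. \<forall>j\<in>idx. bform M (v i) (v j) = g i j"
    using S unfolding SYMG_def by (simp add: bMv)
  define G where "G = F ** V"
  have Gab: "G $ a $ b = g (nidx a) (nidx b)" for a b
  proof -
    have "G $ a $ b = c (nidx a) * ev (eta (nidx a)) (v (nidx b))"
      by (simp add: G_def F_def V_def Vmat_def matrix_matrix_mult_def ev_def inner_vec_def sum_distrib_left mult.assoc)
    also have "\<dots> = g (nidx a) (nidx b)" using S nidx_in unfolding SYMG_def by blast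
    finally show ?thesis .
  qed
  have Gs: "transpose G = G"
    by (simp add: vec_eq_iff transpose_def Gab f(2)[OF nidx_in nidx_in])
  have MG: "M = transpose W ** G ** W"
    by (simp add: M_def G_def matrix_mul_assoc[symmetric] W(2))
  have Msym: "transpose M = M"
    unfolding MG by (simp add: matrix_transpose_mul Gs matrix_mul_assoc)
  have I: "1 \<in> idx" "2 \<in> idx" "3 \<in> idx" "4 \<in> idx" by (simp_all add: idx_def)
  have g0: "g m m = 0" if "m \<in> idx" for m
    using a[OF that that] f(1)[OF that that] tet_D(1)[OF T, rule_format, OF that] by simp
  have neg: "\<forall>w\<in>tet_interior v s. bform M w w < 0"
  proof
    fix w assume "w \<in> tet_interior v s"
    then obtain lam where lam: "\<forall>m\<in>idx. lam m > 0" "w = (\<Sum>m\<in>idx. (lam m * s m) *\<^sub>R v m)"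
      unfolding tet_interior_def by blast
    have w: "w = lc v (lam 1 * s 1) (lam 2 * s 2) (lam 3 * s 3) (lam 4 * s 4)"
      unfolding lam(2) sum_idx lc_def ..
    have t: "(lam i * s i) * (lam j * s j) * g i j < 0" if "i \<in> idx" "j \<in> idx" "i \<noteq> j" for i j
    proof -
      have e: "(lam i * s i) * (lam j * s j) * g i j = (lam i * lam j) * (s i * s j * g i j)" by (simp add: algebra_simps)
      have "lam i * lam j > 0" using lam(1) that by simp
      moreover have "s i * s j * g i j < 0" using sgn that by blast
      ultimately show ?thesis unfolding e by (rule mult_pos_neg)
    qed
    show "bform M w w < 0"
      unfolding w bform_lc[OF gv] g0[OF I(1)] g0[OF I(2)] g0[OF I(3)] g0[OF I(4)]
      using t[OF I(1) I(2)] t[OF I(1) I(3)] t[OF I(1) I(4)] t[OF I(2) I(1)] t[OF I(2) I(3)] t[OF I(2) I(4)]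
        t[OF I(3) I(1)] t[OF I(3) I(2)] t[OF I(3) I(4)] t[OF I(4) I(1)] t[OF I(4) I(2)] t[OF I(4) I(3)]
      by simp
  qed
  have insc: "inscribed_in v eta M"
    unfolding inscribed_in_def
  proof (intro conjI ballI)
    show "\<exists>s. sign_choice s \<and> (\<forall>w\<in>tet_interior v s. bform M w w < 0)" using sc neg by blast
  next
    fix m assume m: "m \<in> idx"
    show "bform M (v m) (v m) = 0" using gv m g0 by simp
    have "bform M (v m) (eta m) = c m * (eta m \<bullet> eta m)" by (simp add: bMv[OF m] ev_def)
    moreover have "c m \<noteq> 0" using f(1)[OF m m] .
    moreover have "eta m \<bullet> eta m \<noteq> 0" using tet_D(1)[OF T, rule_format, OF m] by simp
    ultimately have "bform M (v m) (eta m) \<noteq> 0" by simp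
    thus "\<not> in_radical M (v m)" unfolding in_radical_def by blast
    show "\<exists>c. c \<noteq> 0 \<and> (\<forall>y. bform M (v m) y = c * ev (eta m) y)"
      using bMv[OF m] f(1)[OF m m] by blast
  qed
  have G0: "g 1 1 = 0" "g 2 2 = 0" "g 3 3 = 0" "g 4 4 = 0" using g0 I by blast+
  have GS: "g 2 1 = g 1 2" "g 3 1 = g 1 3" "g 4 1 = g 1 4" "g 3 2 = g 2 3" "g 4 2 = g 2 4" "g 4 3 = g 3 4"
    using f(2) I by blast+
  interpret gram M v g
    by (unfold_locales; (rule gv | rule G0 | rule GS))
  have sq: "s i * s i = 1" if "i \<in> idx" for i using sc that pm1_sq unfolding sign_choice_def by blast
  have n1: "s 1 * s 2 * g 1 2 < 0" "s 1 * s 3 * g 1 3 < 0" "s 2 * s 3 * g 2 3 < 0" using sgn I by simp_all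
  have "(s 1 * s 2 * g 1 2) * (s 1 * s 3 * g 1 3) > 0" by (rule mult_neg_neg[OF n1(1) n1(2)])
  hence neg3: "(s 1 * s 2 * g 1 2) * (s 1 * s 3 * g 1 3) * (s 2 * s 3 * g 2 3) < 0"
    by (rule mult_pos_neg[OF _ n1(3)])
  have e: "(s 1 * s 2 * g 1 2) * (s 1 * s 3 * g 1 3) * (s 2 * s 3 * g 2 3) =
      (s 1 * s 1) * (s 2 * s 2) * (s 3 * s 3) * (g 1 2 * g 1 3 * g 2 3)" by (simp add: algebra_simps)
  have sg3: "g 1 2 * g 1 3 * g 2 3 < 0"
    using neg3 unfolding e sq[OF I(1)] sq[OF I(2)] sq[OF I(3)] by simp
  have nz: "g 1 2 \<noteq> 0" "g 1 3 \<noteq> 0" "g 2 3 \<noteq> 0" using f(3) I by simp_all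
  note GT = gram_types[OF LI_v[OF tet_D(3)[OF T]] nz sg3]
  have "hyperbolic_form M \<or> ads_form M \<or> halfpipe_form M"
    unfolding hyperbolic_form_def ads_form_def halfpipe_form_def
    using GT Msym by (cases "QQ < 0"; cases "QQ > 0") auto
  with insc show ?thesis by blast
qed





lemma det_forms:
  "hyperbolic_form M \<Longrightarrow> det M < 0" "ads_form M \<Longrightarrow> det M > 0" "halfpipe_form M \<Longrightarrow> det M = 0"
proof -
  assume "hyperbolic_form M"
  then obtain k where "k > 0" "det M * k = 1 * 1 * 1 * (-1)"
    using congr_det unfolding hyperbolic_form_def by blast
  thus "det M < 0" by (smt (verit) mult_nonneg_nonneg)
next
  assume "ads_form M"
  then obtain k where "k > 0" "det M * k = 1 * 1 * (-1) * (-1)"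
    using congr_det unfolding ads_form_def by blast
  thus "det M > 0" by (smt (verit) mult_nonpos_nonneg)
next
  assume "halfpipe_form M"
  then obtain k where "k > 0" "det M * k = 1 * 1 * (-1) * 0"
    using congr_det unfolding halfpipe_form_def by blast
  thus "det M = 0" by simp
qed

lemma inscribed_SYMG:
  assumes T: "tetrahedron_of_flags v eta" and I: "inscribed_in v eta M" and sym: "transpose M = M"
  shows "\<exists>c. SYMG v eta (\<lambda>i j. bform M (v i) (v j)) c"
proof -
  have "\<forall>m\<in>idx. \<exists>c. c \<noteq> 0 \<and> (\<forall>y. bform M (v m) y = c * ev (eta m) y)"
    using I unfolding inscribed_in_def by blast
  then obtain c where c: "\<forall>m\<in>idx. c m \<noteq> 0 \<and> (\<forall>y. bform M (v m) y = c m * ev (eta m) y)"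
    by (rule bchoice[elim_format]) blast
  have "SYMG v eta (\<lambda>i j. bform M (v i) (v j)) c"
    unfolding SYMG_def
  proof (intro conjI ballI impI)
    fix i assume i: "i \<in> idx"
    show "c i \<noteq> 0" using c i by blast
    fix j assume j: "j \<in> idx"
    show "c i * ev (eta i) (v j) = bform M (v i) (v j)" using c i by simp
    show "bform M (v i) (v j) = bform M (v j) (v i)" by (rule bform_sym[OF sym])
    assume "i \<noteq> j"
    hence "ev (eta i) (v j) \<noteq> 0" using tet_D(2)[OF T, rule_format, OF i j] by simp
    thus "bform M (v i) (v j) \<noteq> 0" using c i by simp
  qed
  thus ?thesis by blast
qed

lemma T3_inscribed:
  assumes T: "tetrahedron_of_flags v eta"
  and t1: "triple_ratio v eta (1,2,3,4) = 1" and t2: "triple_ratio v eta (1,3,4,2) = 1"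
  and t3: "triple_ratio v eta (1,4,2,3) = 1"
  shows "inscribed_tetrahedron_of_flags v eta" "\<exists>g c. SYMG v eta g c"
proof -
  obtain s \<epsilon> where s: "sign_choice s" "\<forall>w\<in>tet_interior v s. \<forall>m\<in>idx. ev (eta m) w \<noteq> 0"
    "\<forall>m\<in>idx. \<epsilon> m = 1 \<or> \<epsilon> m = -1" "\<forall>i\<in>idx. \<forall>j\<in>idx. i \<noteq> j \<longrightarrow> \<epsilon> i * s j * ev (eta i) (v j) > 0"
    using sign_norm[OF T] by blast
  interpret normal v eta s \<epsilon>
    using s unfolding sign_choice_def by unfold_locales blast+
  obtain g c where gc: "SYMG v eta g c" "\<forall>i\<in>idx. \<forall>j\<in>idx. i \<noteq> j \<longrightarrow> s i * s j * g i j < 0"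
    using T3_SYMG[OF T t1 t2 t3] by blast
  obtain M where "inscribed_in v eta M" "hyperbolic_form M \<or> ads_form M \<or> halfpipe_form M"
    using construct_M[OF T gc(1) s(1) gc(2)] by blast
  thus "inscribed_tetrahedron_of_flags v eta"
    unfolding inscribed_tetrahedron_of_flags_def inscribed_hyperbolic_def inscribed_ads_def inscribed_halfpipe_def
    by blast
  show "\<exists>g c. SYMG v eta g c" using gc by blast
qed

lemma edge3_T3:
  assumes T: "tetrahedron_of_flags v eta"
  and e1: "edge_ratio v eta (1,2,3,4) = edge_ratio v eta (ef_op (1,2,3,4))"
  and e2: "edge_ratio v eta (1,3,4,2) = edge_ratio v eta (ef_op (1,3,4,2))"
  and e3: "edge_ratio v eta (1,4,2,3) = edge_ratio v eta (ef_op (1,4,2,3))"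
  shows "triple_ratio v eta (1,2,3,4) = 1 \<and> triple_ratio v eta (1,3,4,2) = 1 \<and> triple_ratio v eta (1,4,2,3) = 1"
proof -
  obtain s \<epsilon> where s: "sign_choice s" "\<forall>w\<in>tet_interior v s. \<forall>m\<in>idx. ev (eta m) w \<noteq> 0"
    "\<forall>m\<in>idx. \<epsilon> m = 1 \<or> \<epsilon> m = -1" "\<forall>i\<in>idx. \<forall>j\<in>idx. i \<noteq> j \<longrightarrow> \<epsilon> i * s j * ev (eta i) (v j) > 0"
    using sign_norm[OF T] by blast
  interpret normal v eta s \<epsilon>
    using s unfolding sign_choice_def by unfold_locales blast+
  show ?thesis using edge_T3[OF e1 e2 e3] by blast
qed

lemma SYMG_all:
  assumes S: "SYMG v eta g c"
  shows "\<forall>\<sigma>. edge_face \<sigma> \<longrightarrow> triple_ratio v eta \<sigma> = 1"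
    "\<forall>\<sigma>. edge_face \<sigma> \<longrightarrow> edge_ratio v eta \<sigma> = edge_ratio v eta (ef_op \<sigma>)"
proof -
  show "\<forall>\<sigma>. edge_face \<sigma> \<longrightarrow> triple_ratio v eta \<sigma> = 1"
  proof (intro allI impI)
    fix \<sigma> assume e: "edge_face \<sigma>"
    obtain i j k l where \<sigma>: "\<sigma> = (i,j,k,l)" by (cases \<sigma>) auto
    show "triple_ratio v eta \<sigma> = 1" unfolding \<sigma>
      using ef_props[OF e[unfolded \<sigma>]] by (intro SYMG_triple[OF S]) blast+
  qed
  show "\<forall>\<sigma>. edge_face \<sigma> \<longrightarrow> edge_ratio v eta \<sigma> = edge_ratio v eta (ef_op \<sigma>)"
  proof (intro allI impI)
    fix \<sigma> assume e: "edge_face \<sigma>"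
    obtain i j k l where \<sigma>: "\<sigma> = (i,j,k,l)" by (cases \<sigma>) auto
    show "edge_ratio v eta \<sigma> = edge_ratio v eta (ef_op \<sigma>)" unfolding \<sigma>
      using ef_props[OF e[unfolded \<sigma>]] by (intro SYMG_edge[OF S]) blast+
  qed
qed



lemma j_part:
  assumes T: "tetrahedron_of_flags v eta" and ins: "inscribed_tetrahedron_of_flags v eta"
  and e: "edge_face \<sigma>"
  shows "(j_inv v eta \<sigma> > 0 \<longrightarrow> inscribed_hyperbolic v eta) \<and>
         (j_inv v eta \<sigma> < 0 \<longrightarrow> inscribed_ads v eta) \<and>
         (j_inv v eta \<sigma> = 0 \<longrightarrow> inscribed_halfpipe v eta)"
proof -
  obtain M where M: "inscribed_in v eta M" and F: "hyperbolic_form M \<or> ads_form M \<or> halfpipe_form M"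
    using ins unfolding inscribed_tetrahedron_of_flags_def inscribed_hyperbolic_def inscribed_ads_def
      inscribed_halfpipe_def by blast
  have sym: "transpose M = M" using F unfolding hyperbolic_form_def ads_form_def halfpipe_form_def by blast
  define g where "g i j = bform M (v i) (v j)" for i j
  obtain c where S: "SYMG v eta g c" using inscribed_SYMG[OF T M sym] unfolding g_def[abs_def] by blast
  obtain i j k l where \<sigma>: "\<sigma> = (i,j,k,l)" by (cases \<sigma>) auto
  note d = ef_props[OF e[unfolded \<sigma>]]
  note f = SYMG_facts[OF S]
  have I: "1 \<in> idx" "2 \<in> idx" "3 \<in> idx" "4 \<in> idx" by (simp_all add: idx_def)
  have g0: "g m m = 0" if "m \<in> idx" for m using M that unfolding inscribed_in_def g_def by blast
  have G0: "g 1 1 = 0" "g 2 2 = 0" "g 3 3 = 0" "g 4 4 = 0" using g0 I by blast+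
  have GS: "g 2 1 = g 1 2" "g 3 1 = g 1 3" "g 4 1 = g 1 4" "g 3 2 = g 2 3" "g 4 2 = g 2 4" "g 4 3 = g 3 4"
    using f(2) I by blast+
  have gv: "\<forall>i\<in>idx. \<forall>j\<in>idx. bform M (v i) (v j) = g i j" by (simp add: g_def)
  interpret gram M v g
    by (unfold_locales; (rule gv | rule G0 | rule GS))
  have gsym: "\<forall>i\<in>idx. \<forall>j\<in>idx. g i j = g j i" using f(2) by metis
  have jv: "j_inv v eta \<sigma> = - QQ / (4 * (g i l * g j k)^2)"
    unfolding \<sigma> SYMG_j[OF S d[THEN conjunct1] d[THEN conjunct2, THEN conjunct1]
        d[THEN conjunct2, THEN conjunct2, THEN conjunct1] d[THEN conjunct2, THEN conjunct2, THEN conjunct2, THEN conjunct1]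
        d[THEN conjunct2, THEN conjunct2, THEN conjunct2, THEN conjunct2, THEN conjunct1]
        d[THEN conjunct2, THEN conjunct2, THEN conjunct2, THEN conjunct2, THEN conjunct2, THEN conjunct1]
        d[THEN conjunct2, THEN conjunct2, THEN conjunct2, THEN conjunct2, THEN conjunct2, THEN conjunct2, THEN conjunct1]
        d[THEN conjunct2, THEN conjunct2, THEN conjunct2, THEN conjunct2, THEN conjunct2, THEN conjunct2, THEN conjunct2, THEN conjunct1]
        d[THEN conjunct2, THEN conjunct2, THEN conjunct2, THEN conjunct2, THEN conjunct2, THEN conjunct2, THEN conjunct2, THEN conjunct2, THEN conjunct1]
        d[THEN conjunct2, THEN conjunct2, THEN conjunct2, THEN conjunct2, THEN conjunct2, THEN conjunct2, THEN conjunct2, THEN conjunct2, THEN conjunct2]]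
    using Qf_perm[OF gsym] d QQ_def by presburger
  have zz: "g i l * g j k \<noteq> 0" using f(3) d by simp
  hence den: "4 * (g i l * g j k)^2 > 0" by simp
  have nz: "g 1 2 \<noteq> 0" "g 1 3 \<noteq> 0" "g 2 3 \<noteq> 0" using f(3) I by simp_all
  obtain kk where kk: "kk > 0" "det M * kk = 16 * g 1 2^6 * g 1 3^2 * g 2 3^2 * QQ"
    using gram_det[OF LI_v[OF tet_D(3)[OF T]] nz] by blast
  have K: "16 * g 1 2^6 * g 1 3^2 * g 2 3^2 > 0" using nz by simp
  have jQ: "j_inv v eta \<sigma> > 0 \<longleftrightarrow> QQ < 0" "j_inv v eta \<sigma> < 0 \<longleftrightarrow> QQ > 0" "j_inv v eta \<sigma> = 0 \<longleftrightarrow> QQ = 0"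
    unfolding jv using den by (simp_all add: divide_less_0_iff zero_less_divide_iff)
  have dQ: "det M < 0 \<longleftrightarrow> QQ < 0" "det M > 0 \<longleftrightarrow> QQ > 0" "det M = 0 \<longleftrightarrow> QQ = 0"
  proof -
    have "det M * kk < 0 \<longleftrightarrow> QQ < 0" "det M * kk > 0 \<longleftrightarrow> QQ > 0" "det M * kk = 0 \<longleftrightarrow> QQ = 0"
      unfolding kk(2) using K by (simp_all add: mult_less_0_iff zero_less_mult_iff)
    thus "det M < 0 \<longleftrightarrow> QQ < 0" "det M > 0 \<longleftrightarrow> QQ > 0" "det M = 0 \<longleftrightarrow> QQ = 0"
      using kk(1) by (simp_all add: mult_less_0_iff zero_less_mult_iff)
  qed
  show ?thesis
    unfolding inscribed_hyperbolic_def inscribed_ads_def inscribed_halfpipe_def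
    using F M det_forms jQ dQ by (smt (verit))
qed


lemma insc_SYMG_ex:
  assumes T: "tetrahedron_of_flags v eta" and ins: "inscribed_tetrahedron_of_flags v eta"
  shows "\<exists>g c. SYMG v eta g c"
proof -
  obtain M where M: "inscribed_in v eta M" and F: "hyperbolic_form M \<or> ads_form M \<or> halfpipe_form M"
    using ins unfolding inscribed_tetrahedron_of_flags_def inscribed_hyperbolic_def inscribed_ads_def
      inscribed_halfpipe_def by blast
  have sym: "transpose M = M" using F unfolding hyperbolic_form_def ads_form_def halfpipe_form_def by blast
  show ?thesis using inscribed_SYMG[OF T M sym] by blast
qed

theorem theorem5p3:
  fixes v eta :: "nat \<Rightarrow> real^4"
  assumes "tetrahedron_of_flags v eta"
  shows "(inscribed_tetrahedron_of_flags v eta \<longleftrightarrow>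
            (\<forall>\<sigma>. edge_face \<sigma> \<longrightarrow> triple_ratio v eta \<sigma> = 1))
       \<and> ((\<forall>\<sigma>. edge_face \<sigma> \<longrightarrow> triple_ratio v eta \<sigma> = 1) \<longleftrightarrow>
            (\<forall>\<sigma>. edge_face \<sigma> \<longrightarrow> edge_ratio v eta \<sigma> = edge_ratio v eta (ef_op \<sigma>)))
       \<and> (inscribed_tetrahedron_of_flags v eta \<longrightarrow>
            (\<forall>\<sigma>. edge_face \<sigma> \<longrightarrow>
               (j_inv v eta \<sigma> > 0 \<longrightarrow> inscribed_hyperbolic v eta) \<and>
               (j_inv v eta \<sigma> < 0 \<longrightarrow> inscribed_ads v eta) \<and>
               (j_inv v eta \<sigma> = 0 \<longrightarrow> inscribed_halfpipe v eta)))"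
proof -
  note T = assms
  let ?I = "inscribed_tetrahedron_of_flags v eta"
  let ?t = "\<forall>\<sigma>. edge_face \<sigma> \<longrightarrow> triple_ratio v eta \<sigma> = 1"
  let ?e = "\<forall>\<sigma>. edge_face \<sigma> \<longrightarrow> edge_ratio v eta \<sigma> = edge_ratio v eta (ef_op \<sigma>)"
  have It: "?I \<Longrightarrow> ?t" using insc_SYMG_ex[OF T] SYMG_all(1) by blast
  have tI: "?t \<Longrightarrow> ?I" and te: "?t \<Longrightarrow> ?e"
  proof -
    assume t: ?t
    have t3: "triple_ratio v eta (1,2,3,4) = 1" "triple_ratio v eta (1,3,4,2) = 1" "triple_ratio v eta (1,4,2,3) = 1"
      using t ef_1234 ef_1342 ef_1423 by blast+
    show ?I by (rule T3_inscribed(1)[OF T t3])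
    show ?e using T3_inscribed(2)[OF T t3] SYMG_all(2) by blast
  qed
  have et: "?e \<Longrightarrow> ?t"
  proof -
    assume e: ?e
    have "edge_ratio v eta (1,2,3,4) = edge_ratio v eta (ef_op (1,2,3,4))"
         "edge_ratio v eta (1,3,4,2) = edge_ratio v eta (ef_op (1,3,4,2))"
         "edge_ratio v eta (1,4,2,3) = edge_ratio v eta (ef_op (1,4,2,3))"
      using e ef_1234 ef_1342 ef_1423 by blast+
    hence t3: "triple_ratio v eta (1,2,3,4) = 1" "triple_ratio v eta (1,3,4,2) = 1" "triple_ratio v eta (1,4,2,3) = 1"
      using edge3_T3[OF T] by blast+
    show ?t using T3_inscribed(2)[OF T t3] SYMG_all(1) by blast
  qed
  have j: "?I \<longrightarrow> (\<forall>\<sigma>. edge_face \<sigma> \<longrightarrow>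
               (j_inv v eta \<sigma> > 0 \<longrightarrow> inscribed_hyperbolic v eta) \<and>
               (j_inv v eta \<sigma> < 0 \<longrightarrow> inscribed_ads v eta) \<and>
               (j_inv v eta \<sigma> = 0 \<longrightarrow> inscribed_halfpipe v eta))"
    using j_part[OF T] by blast
  show ?thesis using It tI te et j by blast
qed

end
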